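(* Let $(\mathbf{T},V)$ be a branching random walk with reproduction law $\mathcal{L}$ satisfying (A1) and (A3). There exist $a>0$ and $\rho>1$ such that almost surely, for all $n\ge1$ large enough, \[\#\{|u|=n:\ \forall j\le n,\ V(u_j)\ge-na\}\ge\rho^n.\]
   Context: $\mathcal{L}$ is the law of a point process $L$ on $\mathbb{R}$. The branching random walk $(\mathbf{T},V)$ starts with one individual at $0$; each individual dies giving birth to children positioned according to an independent copy of $L$ shifted by its position. $|u|$ is the generation of $u$, $V(u)$ its position, $u_j$ its ancestor at generation $j$. (A1) $\mathbb{P}(\#L=0)=0$ and $\mathbb{E}[\#L]>1$. (A3) $\mathbb{E}[\sum_{\ell\in L}e^\ell(\log\sum_{\ell'\in L}e^{\ell'-\ell})^2]<\infty$. *)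

theory Defs
  imports "HOL-Probability.Probability"
begin

text \<open>A realization of the point process L: its number of points (possibly infinite)
and an enumeration of its points (only indices i with i < count matter).\<close>
type_synonym pp = "enat \<times> (nat \<Rightarrow> real)"

definition pp_space :: "pp measure" where
  "pp_space = count_space UNIV \<Otimes>\<^sub>M (\<Pi>\<^sub>M i\<in>UNIV. (borel :: real measure))"

definition A3_integrand :: "pp \<Rightarrow> ennreal" where
  "A3_integrand z =
     (\<Sum>i. if enat i < fst z then
        (let W = (\<Sum>j. if enat j < fst z then ennreal (exp (snd z j - snd z i)) else 0)
         in ennreal (exp (snd z i)) *
            (if W = \<infinity> then \<infinity> else ennreal ((ln (enn2real W))\<^sup>2)))
      else 0)"

text \<open>Ulam-Harris tree: u is an individual iff each step picks an existing child.\<close>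
definition in_tree :: "(nat list \<Rightarrow> enat) \<Rightarrow> nat list \<Rightarrow> bool" where
  "in_tree N u \<longleftrightarrow> (\<forall>k<length u. enat (u ! k) < N (take k u))"

definition pos :: "(nat list \<Rightarrow> nat \<Rightarrow> real) \<Rightarrow> nat list \<Rightarrow> real" where
  "pos X u = (\<Sum>k<length u. X (take k u) (u ! k))"

definition good_set :: "(nat list \<Rightarrow> enat) \<Rightarrow> (nat list \<Rightarrow> nat \<Rightarrow> real) \<Rightarrow> real \<Rightarrow> nat \<Rightarrow> nat list set" where
  "good_set N X a n = {u. in_tree N u \<and> length u = n \<and>
                          (\<forall>j\<le>n. pos X (take j u) \<ge> - (real n * a))}"

end

theory Submission
  imports Defs
begin
definition gd :: "real \<Rightarrow> pp \<Rightarrow> nat \<Rightarrow> real" where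
  "gd a z i = (if enat i < fst z \<and> - a \<le> snd z i then 1 else 0)"

primrec Zc :: "nat \<Rightarrow> real \<Rightarrow> (nat list \<Rightarrow> pp) \<Rightarrow> nat list \<Rightarrow> nat \<Rightarrow> real" where
  "Zc K a \<zeta> v 0 = 1"
| "Zc K a \<zeta> v (Suc n) = (\<Sum>i<K. gd a (\<zeta> v) i * Zc K a \<zeta> (v @ [i]) n)"

abbreviation CS :: "(nat list \<Rightarrow> pp) measure" where
  "CS \<equiv> PiM UNIV (\<lambda>_. pp_space)"

lemma gd_meas[measurable]: "(\<lambda>z. gd a z i) \<in> borel_measurable pp_space"
  unfolding gd_def pp_space_def by measurable

lemma gd_meas'[measurable]: "(\<lambda>\<zeta>. gd a (\<zeta> v) i) \<in> borel_measurable CS"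
  by measurable

lemma Zc_meas[measurable]: "(\<lambda>\<zeta>. Zc K a \<zeta> v n) \<in> borel_measurable CS"
  by (induction n arbitrary: v) auto

definition dep :: "nat list set \<Rightarrow> ((nat list \<Rightarrow> pp) \<Rightarrow> 'b) \<Rightarrow> bool" where
  "dep A F \<longleftrightarrow> (\<forall>\<zeta> \<zeta>'. (\<forall>u\<in>A. \<zeta> u = \<zeta>' u) \<longrightarrow> F \<zeta> = F \<zeta>')"

definition sub :: "nat list \<Rightarrow> nat list set" where
  "sub v = {u. \<exists>w. u = v @ w}"

lemma Zc_dep: "dep (sub v) (\<lambda>\<zeta>. Zc K a \<zeta> v n)"
proof (induction n arbitrary: v)
  case 0 then show ?case by (simp add: dep_def)
next
  case (Suc n)
  show ?case unfolding dep_def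
  proof (intro allI impI)
    fix \<zeta> \<zeta>' :: "nat list \<Rightarrow> pp" assume h: "\<forall>u\<in>sub v. \<zeta> u = \<zeta>' u"
    have "v \<in> sub v" by (auto simp: sub_def)
    moreover have "\<And>i. \<forall>u\<in>sub (v@[i]). \<zeta> u = \<zeta>' u" using h by (auto simp: sub_def)
    moreover have "\<And>i. Zc K a \<zeta> (v@[i]) n = Zc K a \<zeta>' (v@[i]) n"
      using Suc[unfolded dep_def] calculation(2) by blast
    ultimately show "Zc K a \<zeta> v (Suc n) = Zc K a \<zeta>' v (Suc n)"
      using h by auto
  qed
qed

definition ext :: "nat list set \<Rightarrow> (nat list \<Rightarrow> pp) \<Rightarrow> (nat list \<Rightarrow> pp)" where
  "ext A f = (\<lambda>u. if u \<in> A then f u else (0, \<lambda>_. 0))"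

lemma space_pp[simp]: "space pp_space = UNIV"
  by (simp add: pp_space_def space_pair_measure space_PiM)

lemma ext_meas[measurable]: "ext A \<in> measurable (PiM A (\<lambda>_. pp_space)) CS"
  unfolding ext_def
proof (rule measurable_PiM_single')
  fix u show "(\<lambda>\<omega>. if u \<in> A then \<omega> u else (0, \<lambda>_. 0)) \<in> measurable (Pi\<^sub>M A (\<lambda>_. pp_space)) pp_space"
    by (cases "u \<in> A") auto
qed auto

locale bconf = prob_space M for M :: "'w measure" +
  fixes Z :: "nat list \<Rightarrow> 'w \<Rightarrow> pp" and LL :: "pp measure"
  assumes indep: "indep_vars (\<lambda>_. pp_space) Z UNIV"
    and dist: "\<And>u. distr M pp_space (Z u) = LL"
begin

definition cf :: "'w \<Rightarrow> nat list \<Rightarrow> pp" where "cf \<omega> = (\<lambda>u. Z u \<omega>)"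

lemma Z_meas[measurable]: "Z u \<in> measurable M pp_space"
  using indep by (auto simp: indep_vars_def)

lemma cf_meas[measurable]: "cf \<in> measurable M CS"
  unfolding cf_def by (rule measurable_PiM_single') auto

lemma indep_fun:
  assumes "A \<inter> B = {}" "F \<in> borel_measurable CS" "G \<in> borel_measurable CS"
    "dep A F" "dep B G"
  shows "indep_var borel (\<lambda>\<omega>. F (cf \<omega>)) borel (\<lambda>\<omega>. G (cf \<omega>))"
proof -
  have i: "indep_var (PiM A (\<lambda>_. pp_space)) (\<lambda>\<omega>. restrict (\<lambda>i. Z i \<omega>) A)
                     (PiM B (\<lambda>_. pp_space)) (\<lambda>\<omega>. restrict (\<lambda>i. Z i \<omega>) B)"
    using indep_var_restrict[OF indep assms(1)] by simp
  have "indep_var borel ((F \<circ> ext A) \<circ> (\<lambda>\<omega>. restrict (\<lambda>i. Z i \<omega>) A))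
                  borel ((G \<circ> ext B) \<circ> (\<lambda>\<omega>. restrict (\<lambda>i. Z i \<omega>) B))"
    by (rule indep_var_compose[OF i]) (use assms(2,3) in auto)
  moreover have "(F \<circ> ext A) \<circ> (\<lambda>\<omega>. restrict (\<lambda>i. Z i \<omega>) A) = (\<lambda>\<omega>. F (cf \<omega>))"
    using assms(4) by (auto simp: dep_def ext_def cf_def fun_eq_iff)
  moreover have "(G \<circ> ext B) \<circ> (\<lambda>\<omega>. restrict (\<lambda>i. Z i \<omega>) B) = (\<lambda>\<omega>. G (cf \<omega>))"
    using assms(5) by (auto simp: dep_def ext_def cf_def fun_eq_iff)
  ultimately show ?thesis by simp
qed

lemma indep_int:
  fixes F G :: "(nat list \<Rightarrow> pp) \<Rightarrow> real"
  assumes "A \<inter> B = {}" "F \<in> borel_measurable CS" "G \<in> borel_measurable CS"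
    "dep A F" "dep B G" "\<And>\<zeta>. \<bar>F \<zeta>\<bar> \<le> c" "\<And>\<zeta>. \<bar>G \<zeta>\<bar> \<le> d"
  shows "(\<integral>\<omega>. F (cf \<omega>) * G (cf \<omega>) \<partial>M) = (\<integral>\<omega>. F (cf \<omega>) \<partial>M) * (\<integral>\<omega>. G (cf \<omega>) \<partial>M)"
proof (rule indep_var_lebesgue_integral[OF indep_fun[OF assms(1-5)]])
  show "integrable M (\<lambda>\<omega>. F (cf \<omega>))"
    by (rule integrable_const_bound[where B=c]) (use assms(2,6) in auto)
  show "integrable M (\<lambda>\<omega>. G (cf \<omega>))"
    by (rule integrable_const_bound[where B=d]) (use assms(3,7) in auto)
qed

lemma int_dist:
  fixes h :: "pp \<Rightarrow> real"
  assumes "h \<in> borel_measurable pp_space" "\<And>z. \<bar>h z\<bar> \<le> c"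
  shows "(\<integral>\<omega>. h (cf \<omega> u) \<partial>M) = (\<integral>z. h z \<partial>LL)"
proof -
  have "(\<integral>z. h z \<partial>LL) = (\<integral>z. h z \<partial>distr M pp_space (Z u))" by (simp add: dist)
  also have "\<dots> = (\<integral>\<omega>. h (Z u \<omega>) \<partial>M)"
    by (subst integral_distr) (use assms in auto)
  finally show ?thesis by (simp add: cf_def)
qed

end

lemma gd_01: "0 \<le> gd a z i" "gd a z i \<le> 1" by (auto simp: gd_def)
lemma gd_sq: "gd a z i * gd a z i = gd a z i" by (auto simp: gd_def)

lemma Zc_nonneg: "0 \<le> Zc K a \<zeta> v n"
  by (induction n arbitrary: v) (auto intro!: sum_nonneg mult_nonneg_nonneg simp: gd_01)

lemma Zc_le: "Zc K a \<zeta> v n \<le> real K ^ n"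
proof (induction n arbitrary: v)
  case (Suc n)
  have "Zc K a \<zeta> v (Suc n) \<le> (\<Sum>i<K. 1 * real K ^ n)"
    unfolding Zc.simps by (intro sum_mono mult_mono) (auto simp: gd_01 Suc Zc_nonneg)
  then show ?case by simp
qed simp

lemma Zc_abs: "\<bar>Zc K a \<zeta> v n\<bar> \<le> real K ^ n"
  using Zc_le Zc_nonneg by (metis abs_of_nonneg)

lemma dep_mono: "dep A F \<Longrightarrow> A \<subseteq> B \<Longrightarrow> dep B F"
  unfolding dep_def by blast

lemma dep_single: "dep {v} (\<lambda>\<zeta>. f (\<zeta> v))"
  unfolding dep_def by simp

lemma dep_mult: "dep A F \<Longrightarrow> dep A G \<Longrightarrow> dep A (\<lambda>\<zeta>. F \<zeta> * G \<zeta>)"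
  unfolding dep_def by metis

lemma dep_diff: "dep A F \<Longrightarrow> dep A G \<Longrightarrow> dep A (\<lambda>\<zeta>. F \<zeta> - G \<zeta>)"
  unfolding dep_def by metis

lemma dep_cmult: "dep A F \<Longrightarrow> dep A (\<lambda>\<zeta>. c * F \<zeta>)"
  unfolding dep_def by metis

lemma sub_self: "v \<in> sub v" by (auto simp: sub_def)
lemma not_sub_snoc: "v \<notin> sub (v @ [i])" by (auto simp: sub_def)
lemma sub_disj: "i \<noteq> j \<Longrightarrow> sub (v @ [i]) \<inter> sub (v @ [j]) = {}"
  by (auto simp: sub_def)
lemma sub_snoc_sub: "sub (v @ [i]) \<subseteq> sub v" by (auto simp: sub_def)

context bconf
begin

definition Ex :: "((nat list \<Rightarrow> pp) \<Rightarrow> real) \<Rightarrow> real" where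
  "Ex F = (\<integral>\<omega>. F (cf \<omega>) \<partial>M)"

lemma intg: "(F :: _ \<Rightarrow> real) \<in> borel_measurable CS \<Longrightarrow> (\<And>\<zeta>. \<bar>F \<zeta>\<bar> \<le> (c::real)) \<Longrightarrow> integrable M (\<lambda>\<omega>. F (cf \<omega>))"
  by (rule integrable_const_bound[where B=c]) auto
lemma Ex_indep:
  fixes F G :: "(nat list \<Rightarrow> pp) \<Rightarrow> real"
  assumes "A \<inter> B = {}" "F \<in> borel_measurable CS" "G \<in> borel_measurable CS"
    "dep A F" "dep B G" "\<And>\<zeta>. \<bar>F \<zeta>\<bar> \<le> c" "\<And>\<zeta>. \<bar>G \<zeta>\<bar> \<le> d"
  shows "Ex (\<lambda>\<zeta>. F \<zeta> * G \<zeta>) = Ex F * Ex G"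
  unfolding Ex_def by (rule indep_int[OF assms])

lemma Ex_sum:
  fixes c :: "_ \<Rightarrow> real"
  assumes "\<And>i. i \<in> I \<Longrightarrow> F i \<in> borel_measurable CS" "\<And>i \<zeta>. i \<in> I \<Longrightarrow> \<bar>F i \<zeta>\<bar> \<le> c i"
  shows "Ex (\<lambda>\<zeta>. \<Sum>i\<in>I. F i \<zeta>) = (\<Sum>i\<in>I. Ex (F i))"
  unfolding Ex_def by (rule Bochner_Integration.integral_sum[of I M "\<lambda>i \<omega>. F i (cf \<omega>)"]) (use assms in \<open>auto intro: intg\<close>)

lemma Ex_mono:
  fixes c d :: real
  assumes "F \<in> borel_measurable CS" "G \<in> borel_measurable CS"
    "\<And>\<zeta>. \<bar>F \<zeta>\<bar> \<le> c" "\<And>\<zeta>. \<bar>G \<zeta>\<bar> \<le> d" "\<And>\<zeta>. F \<zeta> \<le> G \<zeta>"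
  shows "Ex F \<le> Ex G"
  unfolding Ex_def by (rule integral_mono) (use assms in \<open>auto intro: intg\<close>)

lemma Ex_const[simp]: "Ex (\<lambda>_. c) = c"
  by (simp add: Ex_def prob_space)

lemma Ex_le_const:
  fixes c d :: real
  assumes "F \<in> borel_measurable CS" "\<And>\<zeta>. \<bar>F \<zeta>\<bar> \<le> d" "\<And>\<zeta>. F \<zeta> \<le> c"
  shows "Ex F \<le> c"
  using Ex_mono[OF assms(1) _ assms(2), of "\<lambda>_. c" "\<bar>c\<bar>"] assms(3) by auto

lemma Ex_cmult: "Ex (\<lambda>\<zeta>. c * F \<zeta>) = c * Ex F"
  by (simp add: Ex_def)

lemma Ex_diff:
  fixes c d :: real
  assumes "F \<in> borel_measurable CS" "G \<in> borel_measurable CS"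
    "\<And>\<zeta>. \<bar>F \<zeta>\<bar> \<le> c" "\<And>\<zeta>. \<bar>G \<zeta>\<bar> \<le> d"
  shows "Ex (\<lambda>\<zeta>. F \<zeta> - G \<zeta>) = Ex F - Ex G"
  unfolding Ex_def by (rule Bochner_Integration.integral_diff) (use assms in \<open>auto intro: intg\<close>)

lemma Ex_gd: "Ex (\<lambda>\<zeta>. gd a (\<zeta> u) i) = (\<integral>z. gd a z i \<partial>LL)"
  unfolding Ex_def by (rule int_dist[OF gd_meas, where c=1]) (auto simp: gd_def)

end

definition Dc :: "nat \<Rightarrow> real \<Rightarrow> real \<Rightarrow> (nat list \<Rightarrow> pp) \<Rightarrow> nat list \<Rightarrow> nat \<Rightarrow> real" where
  "Dc K a m \<zeta> v n = Zc K a \<zeta> v (Suc n) - m * Zc K a \<zeta> v n"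

lemma Dc_meas[measurable]: "(\<lambda>\<zeta>. Dc K a m \<zeta> v n) \<in> borel_measurable CS"
  unfolding Dc_def by measurable

lemma Dc_dep: "dep (sub v) (\<lambda>\<zeta>. Dc K a m \<zeta> v n)"
  unfolding Dc_def by (intro dep_diff dep_cmult Zc_dep)

lemma Dc_Suc: "Dc K a m \<zeta> v (Suc n) = (\<Sum>i<K. gd a (\<zeta> v) i * Dc K a m \<zeta> (v @ [i]) n)"
  unfolding Dc_def Zc.simps(2)[of K a \<zeta> v "Suc n"] Zc.simps(2)[of K a \<zeta> v n]
  by (simp add: sum_subtractf sum_distrib_left algebra_simps)

lemma Dc_abs: "0 \<le> m \<Longrightarrow> \<bar>Dc K a m \<zeta> v n\<bar> \<le> real K ^ Suc n + m * real K ^ n"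
proof -
  assume m: "0 \<le> m"
  have "\<bar>m * Zc K a \<zeta> v n\<bar> \<le> m * real K ^ n"
    using Zc_abs[of K a \<zeta> v n] m by (simp add: abs_mult mult_left_mono)
  then show ?thesis unfolding Dc_def using Zc_abs[of K a \<zeta> v "Suc n"] by linarith
qed

locale gw = bconf +
  fixes K :: nat and a :: real
begin

lemma LL_prob: "prob_space LL"
  using prob_space_distr[OF Z_meas[of "[]"]] dist by simp

definition p :: "nat \<Rightarrow> real" where "p i = (\<integral>z. gd a z i \<partial>LL)"
definition mu :: real where "mu = (\<Sum>i<K. p i)"

lemma gabs0: "\<bar>gd a z i\<bar> \<le> 1" using gd_01[of a z i] by auto

lemma p_01: "0 \<le> p i" "p i \<le> 1"
proof -
  interpret L: prob_space LL by (rule LL_prob)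
  show "0 \<le> p i" unfolding p_def by (rule integral_nonneg_AE) (auto simp: gd_01)
  have "p i \<le> (\<integral>z. 1 \<partial>LL)" unfolding p_def
  proof (rule integral_mono)
    show "integrable LL (\<lambda>z. gd a z i)"
      by (rule L.integrable_const_bound[where B=1]) (use gd_meas[of a i] in \<open>auto simp: gabs0 dist[symmetric, of "[]"]\<close>)
  qed (auto simp: gd_01)
  then show "p i \<le> 1" by (simp add: L.prob_space)
qed

lemma mu_bounds: "0 \<le> mu" "mu \<le> real K"
  unfolding mu_def using sum_mono[of "{..<K}" p "\<lambda>_. 1"] p_01 by (auto intro: sum_nonneg)

lemma Ex_gd': "Ex (\<lambda>\<zeta>. gd a (\<zeta> u) i) = p i"
  by (simp add: Ex_gd p_def)

lemma gabs: "\<bar>gd a z i\<bar> \<le> 1" using gd_01[of a z i] by auto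

lemma gFabs: "\<bar>F\<bar> \<le> (c::real) \<Longrightarrow> \<bar>gd a z i * F\<bar> \<le> c"
  using gd_01[of a z i] by (auto simp: abs_mult intro: order_trans[OF mult_right_mono[of _ 1]])

lemma Ex_gF:
  fixes F :: "(nat list \<Rightarrow> pp) \<Rightarrow> real"
  assumes "F \<in> borel_measurable CS" "dep (sub (v @ [i])) F" "\<And>\<zeta>. \<bar>F \<zeta>\<bar> \<le> c"
  shows "Ex (\<lambda>\<zeta>. gd a (\<zeta> v) i * F \<zeta>) = p i * Ex F"
  using Ex_indep[of "{v}" "sub (v@[i])" "\<lambda>\<zeta>. gd a (\<zeta> v) i" F 1 c] assms
  by (auto simp: not_sub_snoc dep_single[of v "\<lambda>z. gd a z i"] gabs Ex_gd')

lemma EZ: "Ex (\<lambda>\<zeta>. Zc K a \<zeta> v n) = mu ^ n"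
proof (induction n arbitrary: v)
  case 0 then show ?case by simp
next
  case (Suc n)
  have "Ex (\<lambda>\<zeta>. Zc K a \<zeta> v (Suc n)) = (\<Sum>i<K. Ex (\<lambda>\<zeta>. gd a (\<zeta> v) i * Zc K a \<zeta> (v @ [i]) n))"
    unfolding Zc.simps
    by (rule Ex_sum[where c="\<lambda>_. real K ^ n"]) (auto intro!: gFabs Zc_abs)
  also have "\<dots> = (\<Sum>i<K. p i * mu ^ n)"
    by (intro sum.cong refl, subst Ex_gF[where c="real K ^ n"]) (auto simp: Zc_dep Zc_abs Suc)
  finally show ?case by (simp add: mu_def sum_distrib_right)
qed

end

context gw
begin

lemma cross:
  fixes F G :: "(nat list \<Rightarrow> pp) \<Rightarrow> real"
  assumes ij: "i \<noteq> j" and mF[measurable]: "F \<in> borel_measurable CS" and mG[measurable]: "G \<in> borel_measurable CS"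
    and dF: "dep (sub (v @ [i])) F" and dG: "dep (sub (v @ [j])) G"
    and bF: "\<And>\<zeta>. \<bar>F \<zeta>\<bar> \<le> c" and bG: "\<And>\<zeta>. \<bar>G \<zeta>\<bar> \<le> d"
  shows "Ex (\<lambda>\<zeta>. (gd a (\<zeta> v) i * F \<zeta>) * (gd a (\<zeta> v) j * G \<zeta>))
       = Ex (\<lambda>\<zeta>. gd a (\<zeta> v) i * gd a (\<zeta> v) j) * Ex F * Ex G"
proof -
  have eq: "(\<lambda>\<zeta>. (gd a (\<zeta> v) i * F \<zeta>) * (gd a (\<zeta> v) j * G \<zeta>))
      = (\<lambda>\<zeta>. (gd a (\<zeta> v) i * (gd a (\<zeta> v) j * F \<zeta>)) * G \<zeta>)"
    by (auto simp: fun_eq_iff ac_simps)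
  have dv: "dep ({v} \<union> sub (v @ [i])) (\<lambda>\<zeta>. gd a (\<zeta> v) k)" for k
    by (rule dep_mono[OF dep_single[of v "\<lambda>z. gd a z k"]]) auto
  have 1: "Ex (\<lambda>\<zeta>. (gd a (\<zeta> v) i * (gd a (\<zeta> v) j * F \<zeta>)) * G \<zeta>)
     = Ex (\<lambda>\<zeta>. gd a (\<zeta> v) i * (gd a (\<zeta> v) j * F \<zeta>)) * Ex G"
  proof (rule Ex_indep[where A="{v} \<union> sub (v @ [i])" and B="sub (v @ [j])" and c=c and d=d])
    show "({v} \<union> sub (v @ [i])) \<inter> sub (v @ [j]) = {}"
      using sub_disj[OF ij, of v] not_sub_snoc[of v j] by auto
    show "dep ({v} \<union> sub (v @ [i])) (\<lambda>\<zeta>. gd a (\<zeta> v) i * (gd a (\<zeta> v) j * F \<zeta>))"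
      by (intro dep_mult dv dep_mono[OF dF]) auto
  qed (auto intro!: gFabs bF dG bG)
  have 2: "Ex (\<lambda>\<zeta>. gd a (\<zeta> v) i * (gd a (\<zeta> v) j * F \<zeta>))
     = Ex (\<lambda>\<zeta>. (gd a (\<zeta> v) i * gd a (\<zeta> v) j) * F \<zeta>)"
    by (simp add: ac_simps)
  also have "\<dots> = Ex (\<lambda>\<zeta>. gd a (\<zeta> v) i * gd a (\<zeta> v) j) * Ex F"
  proof (rule Ex_indep[where A="{v}" and B="sub (v @ [i])" and c=1 and d=c])
    show "{v} \<inter> sub (v @ [i]) = {}" using not_sub_snoc[of v i] by auto
    show "dep {v} (\<lambda>\<zeta>. gd a (\<zeta> v) i * gd a (\<zeta> v) j)"
      by (rule dep_single[of v "\<lambda>z. gd a z i * gd a z j"])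
  qed (auto intro!: gFabs gabs bF dF)
  finally show ?thesis using eq 1 by simp
qed

lemma diag:
  fixes F :: "(nat list \<Rightarrow> pp) \<Rightarrow> real"
  assumes mF[measurable]: "F \<in> borel_measurable CS" and dF: "dep (sub (v @ [i])) F"
    and bF: "\<And>\<zeta>. \<bar>F \<zeta>\<bar> \<le> c"
  shows "Ex (\<lambda>\<zeta>. (gd a (\<zeta> v) i * F \<zeta>) * (gd a (\<zeta> v) i * F \<zeta>)) = p i * Ex (\<lambda>\<zeta>. F \<zeta> * F \<zeta>)"
proof -
  have "(\<lambda>\<zeta>. (gd a (\<zeta> v) i * F \<zeta>) * (gd a (\<zeta> v) i * F \<zeta>)) = (\<lambda>\<zeta>. gd a (\<zeta> v) i * (F \<zeta> * F \<zeta>))"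
    using gd_sq by (auto simp: fun_eq_iff algebra_simps)
  moreover have "\<bar>F \<zeta> * F \<zeta>\<bar> \<le> c * c" for \<zeta>
  proof -
    have "\<bar>F \<zeta>\<bar> * \<bar>F \<zeta>\<bar> \<le> c * c" using bF[of \<zeta>] by (intro mult_mono) auto
    then show ?thesis by (metis abs_mult)
  qed
  ultimately show ?thesis
    using Ex_gF[where c="c*c" and F="\<lambda>\<zeta>. F \<zeta> * F \<zeta>" and v=v and i=i] dep_mult[OF dF dF] by simp
qed

lemma Ex_gg_le: "Ex (\<lambda>\<zeta>. gd a (\<zeta> v) i * gd a (\<zeta> v) j) \<le> 1"
  by (rule Ex_le_const[where d=1]) (auto intro!: gFabs gabs mult_le_one simp: gd_01)

lemma Ex_double:
  fixes F :: "nat \<Rightarrow> (nat list \<Rightarrow> pp) \<Rightarrow> real"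
  assumes [measurable]: "\<And>i. F i \<in> borel_measurable CS" and b: "\<And>i \<zeta>. \<bar>F i \<zeta>\<bar> \<le> c"
  shows "Ex (\<lambda>\<zeta>. (\<Sum>i<K. F i \<zeta>) * (\<Sum>i<K. F i \<zeta>)) = (\<Sum>i<K. \<Sum>j<K. Ex (\<lambda>\<zeta>. F i \<zeta> * F j \<zeta>))"
proof -
  have bb: "\<bar>F i \<zeta> * F j \<zeta>\<bar> \<le> c * c" for i j \<zeta>
  proof -
    have "\<bar>F i \<zeta>\<bar> * \<bar>F j \<zeta>\<bar> \<le> c * c" using b[of i \<zeta>] b[of j \<zeta>] by (intro mult_mono) auto
    then show ?thesis by (metis abs_mult)
  qed
  have "Ex (\<lambda>\<zeta>. (\<Sum>i<K. F i \<zeta>) * (\<Sum>i<K. F i \<zeta>)) = Ex (\<lambda>\<zeta>. \<Sum>i<K. \<Sum>j<K. F i \<zeta> * F j \<zeta>)"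
    by (simp add: sum_product)
  also have "\<dots> = (\<Sum>i<K. Ex (\<lambda>\<zeta>. \<Sum>j<K. F i \<zeta> * F j \<zeta>))"
  proof (rule Ex_sum[where c="\<lambda>_. real K * (c * c)"])
    show "\<bar>\<Sum>j<K. F i \<zeta> * F j \<zeta>\<bar> \<le> real K * (c * c)" for i \<zeta>
    proof -
      have "(\<Sum>j<K. \<bar>F i \<zeta> * F j \<zeta>\<bar>) \<le> (\<Sum>j<K. c * c)" by (rule sum_mono) (rule bb)
      then show ?thesis using sum_abs[of "\<lambda>j. F i \<zeta> * F j \<zeta>" "{..<K}"] by (simp del: sum_abs)
    qed
  qed auto
  also have "\<dots> = (\<Sum>i<K. \<Sum>j<K. Ex (\<lambda>\<zeta>. F i \<zeta> * F j \<zeta>))"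
    by (intro sum.cong refl Ex_sum[where c="\<lambda>_. c * c"]) (auto intro: bb)
  finally show ?thesis .
qed

end

context gw
begin

definition CC :: real where "CC = 1 + real K ^ 2 / (mu * (mu - 1))"

lemma sum_if_double:
  "(\<Sum>i<K. \<Sum>j<K. (if i = j then f i else 0) + (c::real)) = (\<Sum>i<K. f i) + real K * real K * c"
  by (simp add: sum.distrib)

lemma EZ2:
  assumes mu1: "mu > 1"
  shows "Ex (\<lambda>\<zeta>. Zc K a \<zeta> v n * Zc K a \<zeta> v n) \<le> CC * mu ^ (2 * n)"
proof (induction n arbitrary: v)
  case 0
  have "0 \<le> real K ^ 2 / (mu * (mu - 1))" using mu1 by auto
  then show ?case by (simp add: CC_def)
next
  case (Suc n)
  define F where "F i \<zeta> = gd a (\<zeta> v) i * Zc K a \<zeta> (v @ [i]) n" for i \<zeta>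
  have Fm[measurable]: "F i \<in> borel_measurable CS" for i unfolding F_def by measurable
  have Fb: "\<bar>F i \<zeta>\<bar> \<le> real K ^ n" for i \<zeta> unfolding F_def by (intro gFabs Zc_abs)
  have mpos: "0 \<le> mu ^ (2 * n)" using mu1 by simp
  have trm: "Ex (\<lambda>\<zeta>. F i \<zeta> * F j \<zeta>) \<le> (if i = j then p i * (CC * mu ^ (2 * n)) else 0) + mu ^ (2 * n)" for i j
  proof (cases "i = j")
    case True
    have "Ex (\<lambda>\<zeta>. F i \<zeta> * F j \<zeta>) = p i * Ex (\<lambda>\<zeta>. Zc K a \<zeta> (v @ [i]) n * Zc K a \<zeta> (v @ [i]) n)"
      unfolding F_def True by (rule diag[where c="real K ^ n"]) (auto simp: Zc_dep Zc_abs)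
    also have "\<dots> \<le> p i * (CC * mu ^ (2 * n))"
      by (rule mult_left_mono[OF Suc p_01(1)])
    finally show ?thesis using True mpos by (simp; linarith)
  next
    case False
    have "Ex (\<lambda>\<zeta>. F i \<zeta> * F j \<zeta>) = Ex (\<lambda>\<zeta>. gd a (\<zeta> v) i * gd a (\<zeta> v) j) * mu ^ n * mu ^ n"
      unfolding F_def by (subst cross[where c="real K ^ n" and d="real K ^ n"]) (auto simp: False Zc_dep Zc_abs EZ)
    also have "\<dots> \<le> 1 * mu ^ n * mu ^ n"
      using mu1 by (intro mult_right_mono Ex_gg_le) auto
    finally show ?thesis using False by (simp add: power_add[symmetric] mult_2)
  qed
  have "Ex (\<lambda>\<zeta>. Zc K a \<zeta> v (Suc n) * Zc K a \<zeta> v (Suc n)) = (\<Sum>i<K. \<Sum>j<K. Ex (\<lambda>\<zeta>. F i \<zeta> * F j \<zeta>))"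
    unfolding Zc.simps F_def[symmetric] by (rule Ex_double[OF Fm Fb])
  also have "\<dots> \<le> (\<Sum>i<K. \<Sum>j<K. (if i = j then p i * (CC * mu ^ (2 * n)) else 0) + mu ^ (2 * n))"
    by (intro sum_mono trm)
  also have "\<dots> = mu * CC * mu ^ (2 * n) + real K ^ 2 * mu ^ (2 * n)"
    unfolding sum_if_double sum_distrib_right[symmetric] mu_def[symmetric] by (simp add: power2_eq_square)
  also have "\<dots> \<le> CC * mu ^ (2 * Suc n)"
  proof -
    have "real K ^ 2 = (CC - 1) * (mu * (mu - 1))" using mu1 by (simp add: CC_def)
    moreover have "0 \<le> mu * (mu - 1)" using mu1 by simp
    ultimately have "mu * CC + real K ^ 2 \<le> CC * mu ^ 2" by (simp add: algebra_simps power2_eq_square)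
    then have "(mu * CC + real K ^ 2) * mu ^ (2 * n) \<le> (CC * mu ^ 2) * mu ^ (2 * n)"
      using mpos by (rule mult_right_mono)
    then show ?thesis by (simp add: algebra_simps power_add power_mult power2_eq_square)
  qed
  finally show ?case .
qed

lemma ED: "Ex (\<lambda>\<zeta>. Dc K a mu \<zeta> v n) = 0"
  using Zc_abs[of K a _ v "Suc n"] unfolding Dc_def
  by (subst Ex_diff[where c="real K ^ Suc n" and d="mu * real K ^ n"])
     (auto simp del: Zc.simps simp: Ex_cmult EZ Zc_abs abs_mult mu_bounds intro!: mult_left_mono)

lemma ED2: "Ex (\<lambda>\<zeta>. Dc K a mu \<zeta> v n * Dc K a mu \<zeta> v n) \<le> real K ^ 2 * mu ^ n"
proof (induction n arbitrary: v)
  case 0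
  have b: "\<bar>Dc K a mu \<zeta> v 0\<bar> \<le> real K" for \<zeta>
  proof -
    have "0 \<le> Zc K a \<zeta> v 1" "Zc K a \<zeta> v 1 \<le> real K" using Zc_nonneg[of K a \<zeta> v 1] Zc_le[of K a \<zeta> v 1] by (auto simp del: Zc.simps)
    then show ?thesis using mu_bounds unfolding Dc_def by (auto simp del: Zc.simps simp: Zc.simps(1))
  qed
  have "Dc K a mu \<zeta> v 0 * Dc K a mu \<zeta> v 0 \<le> real K ^ 2" for \<zeta>
  proof -
    have "\<bar>Dc K a mu \<zeta> v 0\<bar> * \<bar>Dc K a mu \<zeta> v 0\<bar> \<le> real K * real K" using b by (intro mult_mono) auto
    then show ?thesis by (simp add: power2_eq_square)
  qed
  moreover have "\<bar>Dc K a mu \<zeta> v 0 * Dc K a mu \<zeta> v 0\<bar> \<le> real K * real K" for \<zeta>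
  proof -
    have "\<bar>Dc K a mu \<zeta> v 0\<bar> * \<bar>Dc K a mu \<zeta> v 0\<bar> \<le> real K * real K" using b by (intro mult_mono) auto
    then show ?thesis by (metis abs_mult)
  qed
  ultimately show ?case by (intro Ex_le_const[where d="real K * real K"]) auto
next
  case (Suc n)
  define F where "F i \<zeta> = gd a (\<zeta> v) i * Dc K a mu \<zeta> (v @ [i]) n" for i \<zeta>
  have Fm[measurable]: "F i \<in> borel_measurable CS" for i unfolding F_def by measurable
  have Fb: "\<bar>F i \<zeta>\<bar> \<le> real K ^ Suc n + mu * real K ^ n" for i \<zeta>
    unfolding F_def by (intro gFabs Dc_abs mu_bounds)
  have trm: "Ex (\<lambda>\<zeta>. F i \<zeta> * F j \<zeta>) \<le> (if i = j then p i * (real K ^ 2 * mu ^ n) else 0) + 0" for i j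
  proof (cases "i = j")
    case True
    have "Ex (\<lambda>\<zeta>. F i \<zeta> * F j \<zeta>) = p i * Ex (\<lambda>\<zeta>. Dc K a mu \<zeta> (v @ [i]) n * Dc K a mu \<zeta> (v @ [i]) n)"
      unfolding F_def True by (rule diag[OF Dc_meas Dc_dep Dc_abs[OF mu_bounds(1)]])
    also have "\<dots> \<le> p i * (real K ^ 2 * mu ^ n)"
      by (rule mult_left_mono[OF Suc p_01(1)])
    finally show ?thesis using True by simp
  next
    case False
    have "Ex (\<lambda>\<zeta>. F i \<zeta> * F j \<zeta>) = Ex (\<lambda>\<zeta>. gd a (\<zeta> v) i * gd a (\<zeta> v) j) * 0 * 0"
      unfolding F_def cross[OF False Dc_meas Dc_meas Dc_dep Dc_dep Dc_abs[OF mu_bounds(1)] Dc_abs[OF mu_bounds(1)]] ED ..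
    then show ?thesis using False by simp
  qed
  have "Ex (\<lambda>\<zeta>. Dc K a mu \<zeta> v (Suc n) * Dc K a mu \<zeta> v (Suc n)) = (\<Sum>i<K. \<Sum>j<K. Ex (\<lambda>\<zeta>. F i \<zeta> * F j \<zeta>))"
    unfolding Dc_Suc F_def[symmetric] by (rule Ex_double[OF Fm Fb])
  also have "\<dots> \<le> (\<Sum>i<K. \<Sum>j<K. (if i = j then p i * (real K ^ 2 * mu ^ n) else 0) + 0)"
    by (intro sum_mono trm)
  also have "\<dots> = real K ^ 2 * mu ^ Suc n"
    unfolding sum_if_double sum_distrib_right[symmetric] mu_def[symmetric] by (simp add: algebra_simps)
  finally show ?case .
qed

end

lemma space_CS[simp]: "space CS = UNIV"
  by (auto simp: space_PiM)

context gw
begin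

definition PE :: "(nat list \<Rightarrow> pp) set \<Rightarrow> real" where
  "PE S = measure M (cf -` S \<inter> space M)"

lemma Ex_ind: "Ex (indicator S) = PE S"
proof -
  have "(\<lambda>\<omega>. indicator S (cf \<omega>) :: real) = indicator (cf -` S)"
    by (auto simp: fun_eq_iff indicator_def)
  then show ?thesis by (simp add: Ex_def PE_def)
qed

lemma Ex_add:
  fixes F G :: "(nat list \<Rightarrow> pp) \<Rightarrow> real"
  assumes "F \<in> borel_measurable CS" "G \<in> borel_measurable CS"
    "\<And>\<zeta>. \<bar>F \<zeta>\<bar> \<le> c" "\<And>\<zeta>. \<bar>G \<zeta>\<bar> \<le> d"
  shows "Ex (\<lambda>\<zeta>. F \<zeta> + G \<zeta>) = Ex F + Ex G"
  unfolding Ex_def by (rule Bochner_Integration.integral_add) (use assms in \<open>auto intro: intg\<close>)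

lemma ind_meas[measurable]: "S \<in> sets CS \<Longrightarrow> (indicator S :: _ \<Rightarrow> real) \<in> borel_measurable CS"
  by (rule borel_measurable_indicator)

lemma markov:
  fixes F :: "(nat list \<Rightarrow> pp) \<Rightarrow> real"
  assumes S: "S \<in> sets CS" and [measurable]: "F \<in> borel_measurable CS" and b: "\<And>\<zeta>. \<bar>F \<zeta>\<bar> \<le> c"
    and t: "t > 0" and nn: "\<And>\<zeta>. 0 \<le> F \<zeta>" and ge: "\<And>\<zeta>. \<zeta> \<in> S \<Longrightarrow> t \<le> F \<zeta>"
  shows "PE S \<le> Ex F / t"
proof -
  have "Ex (indicator S) \<le> Ex (\<lambda>\<zeta>. (1/t) * F \<zeta>)"
  proof (rule Ex_mono[where c=1 and d="c/t"])
    show "\<bar>indicator S \<zeta>\<bar> \<le> (1::real)" for \<zeta> by (auto simp: indicator_def)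
    show "\<bar>1 / t * F \<zeta>\<bar> \<le> c / t" for \<zeta> using b[of \<zeta>] t by (auto simp: abs_mult divide_right_mono)
    show "indicator S \<zeta> \<le> 1 / t * F \<zeta>" for \<zeta>
      using ge[of \<zeta>] nn[of \<zeta>] t by (auto simp: indicator_def field_simps)
  qed (use S in auto)
  then have "PE S \<le> (1/t) * Ex F" by (simp only: Ex_ind Ex_cmult)
  then show ?thesis by simp
qed

definition bb :: real where "bb = sqrt (sqrt mu)"

lemma bb: assumes "mu > 1" shows "bb > 1" "bb ^ 4 = mu"
proof -
  show "bb > 1" using assms by (simp add: bb_def)
  have "bb ^ 4 = (bb^2)^2" by simp
  also have "\<dots> = mu" using assms by (simp add: bb_def)
  finally show "bb ^ 4 = mu" .
qed

definition Bad :: "nat list \<Rightarrow> nat \<Rightarrow> (nat list \<Rightarrow> pp) set" where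
  "Bad v n = {\<zeta>. bb ^ (3 * n) \<le> \<bar>Dc K a mu \<zeta> v n\<bar>}"

definition Aev :: "nat list \<Rightarrow> nat \<Rightarrow> (nat list \<Rightarrow> pp) set" where
  "Aev v N = {\<zeta>. mu ^ N / 2 \<le> Zc K a \<zeta> v N}"

lemma Bad_sets[measurable]: "Bad v n \<in> sets CS"
proof -
  have "{\<zeta> \<in> space CS. bb ^ (3 * n) \<le> \<bar>Dc K a mu \<zeta> v n\<bar>} \<in> sets CS" by measurable
  then show ?thesis by (simp add: Bad_def)
qed

lemma Aev_sets[measurable]: "Aev v n \<in> sets CS"
proof -
  have "{\<zeta> \<in> space CS. mu ^ n / 2 \<le> Zc K a \<zeta> v n} \<in> sets CS" by measurable
  then show ?thesis by (simp add: Aev_def)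
qed

lemma PE_Bad:
  assumes mu1: "mu > 1"
  shows "PE (Bad v n) \<le> real K ^ 2 * (1 / bb) ^ n"
proof -
  have b1: "bb > 1" and b4: "bb ^ 4 = mu" using bb mu1 by auto
  have tpos: "0 < bb ^ (6 * n)" using b1 by simp
  have "PE (Bad v n) \<le> Ex (\<lambda>\<zeta>. Dc K a mu \<zeta> v n * Dc K a mu \<zeta> v n) / bb ^ (6 * n)"
  proof (rule markov[OF Bad_sets _ _ tpos])
    show "\<bar>Dc K a mu \<zeta> v n * Dc K a mu \<zeta> v n\<bar> \<le> (real K ^ Suc n + mu * real K ^ n) * (real K ^ Suc n + mu * real K ^ n)" for \<zeta>
    proof -
      have "\<bar>Dc K a mu \<zeta> v n\<bar> * \<bar>Dc K a mu \<zeta> v n\<bar> \<le> (real K ^ Suc n + mu * real K ^ n) * (real K ^ Suc n + mu * real K ^ n)"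
        using Dc_abs[OF mu_bounds(1), of K a \<zeta> v n] by (intro mult_mono) auto
      then show ?thesis by (metis abs_mult)
    qed
    show "0 \<le> Dc K a mu \<zeta> v n * Dc K a mu \<zeta> v n" for \<zeta> by simp
    show "bb ^ (6 * n) \<le> Dc K a mu \<zeta> v n * Dc K a mu \<zeta> v n" if "\<zeta> \<in> Bad v n" for \<zeta>
    proof -
      have h: "bb ^ (3 * n) \<le> \<bar>Dc K a mu \<zeta> v n\<bar>" using that by (simp add: Bad_def)
      have "bb ^ (6 * n) = bb ^ (3 * n) * bb ^ (3 * n)" by (simp add: power_add[symmetric])
      also have "\<dots> \<le> \<bar>Dc K a mu \<zeta> v n\<bar> * \<bar>Dc K a mu \<zeta> v n\<bar>" using h b1 by (intro mult_mono) auto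
      finally show ?thesis by (metis abs_mult_self_eq)
    qed
  qed measurable
  also have "\<dots> \<le> real K ^ 2 * mu ^ n / bb ^ (6 * n)"
    using ED2 tpos by (intro divide_right_mono) auto
  also have "\<dots> = real K ^ 2 * (1 / bb) ^ (2 * n)"
  proof -
    have "mu ^ n = bb ^ (4 * n)" using b4 by (simp add: power_mult)
    moreover have "bb ^ (6 * n) = bb ^ (4 * n) * bb ^ (2 * n)" by (simp add: power_add[symmetric])
    ultimately show ?thesis using b1 by (simp add: power_one_over)
  qed
  also have "\<dots> \<le> real K ^ 2 * (1 / bb) ^ n"
    using b1 by (intro mult_left_mono power_decreasing) auto
  finally show ?thesis .
qed

lemma PE_Aev:
  assumes mu1: "mu > 1"
  shows "PE (Aev v N) \<ge> 1 / (4 * CC)"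
proof -
  let ?m = "mu ^ N"
  have mpos: "?m > 0" using mu1 by simp
  have CC1: "CC \<ge> 1" using mu1 by (simp add: CC_def)
  define F where "F \<zeta> = Zc K a \<zeta> v N" for \<zeta>
  have [measurable]: "F \<in> borel_measurable CS" unfolding F_def by measurable
  have Fb: "\<bar>F \<zeta>\<bar> \<le> real K ^ N" for \<zeta> unfolding F_def by (rule Zc_abs)
  have pw: "F \<zeta> \<le> ?m / 2 + (CC * ?m) * indicator (Aev v N) \<zeta> + (1 / (4 * CC * ?m)) * (F \<zeta> * F \<zeta>)" for \<zeta>
  proof (cases "\<zeta> \<in> Aev v N")
    case True
    have "0 \<le> (F \<zeta> - 2 * CC * ?m)^2" by simp
    then have i1: "F \<zeta> * (4 * CC * ?m) \<le> CC * ?m * (4 * CC * ?m) + F \<zeta> * F \<zeta>" by (simp add: power2_eq_square algebra_simps)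
    have Dp: "0 < 4 * CC * ?m" using CC1 mpos by simp
    from i1 Dp have "F \<zeta> \<le> (CC * ?m * (4 * CC * ?m) + F \<zeta> * F \<zeta>) / (4 * CC * ?m)"
      by (simp add: le_divide_eq)
    also have "\<dots> = CC * ?m + (1 / (4 * CC * ?m)) * (F \<zeta> * F \<zeta>)"
      using Dp by (simp add: add_divide_distrib)
    finally have "F \<zeta> \<le> CC * ?m + (1 / (4 * CC * ?m)) * (F \<zeta> * F \<zeta>)" .
    then show ?thesis using True mpos by simp
  next
    case False
    then have "F \<zeta> < ?m / 2" by (simp add: Aev_def F_def)
    moreover have "0 \<le> (1 / (4 * CC * ?m)) * (F \<zeta> * F \<zeta>)" using CC1 mpos by simp
    ultimately show ?thesis using False by simp
  qed
  have FF: "\<bar>F \<zeta> * F \<zeta>\<bar> \<le> real K ^ N * real K ^ N" for \<zeta>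
  proof -
    have "\<bar>F \<zeta>\<bar> * \<bar>F \<zeta>\<bar> \<le> real K ^ N * real K ^ N" using Fb[of \<zeta>] by (intro mult_mono) auto
    then show ?thesis by (metis abs_mult)
  qed
  have ind: "\<bar>indicator (Aev v N) \<zeta>\<bar> \<le> (1::real)" for \<zeta> by (auto simp: indicator_def)
  define H1 where "H1 \<zeta> = (CC * ?m) * indicator (Aev v N) \<zeta>" for \<zeta>
  define H2 where "H2 \<zeta> = (1 / (4 * CC * ?m)) * (F \<zeta> * F \<zeta>)" for \<zeta>
  have [measurable]: "H1 \<in> borel_measurable CS" "H2 \<in> borel_measurable CS"
    unfolding H1_def H2_def by measurable
  have c1: "\<bar>H1 \<zeta>\<bar> \<le> CC * ?m" for \<zeta>
    using ind[of \<zeta>] CC1 mpos by (simp add: H1_def abs_mult mult_left_le)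
  have c2: "\<bar>H2 \<zeta>\<bar> \<le> (1 / (4 * CC * ?m)) * (real K ^ N * real K ^ N)" for \<zeta>
    using FF[of \<zeta>] CC1 mpos by (auto simp: H2_def abs_mult intro!: divide_right_mono)
  have c12: "\<bar>H1 \<zeta> + H2 \<zeta>\<bar> \<le> CC * ?m + (1 / (4 * CC * ?m)) * (real K ^ N * real K ^ N)" for \<zeta>
    using c1[of \<zeta>] c2[of \<zeta>] abs_triangle_ineq[of "H1 \<zeta>" "H2 \<zeta>"] by linarith
  have c0: "\<bar>?m / 2\<bar> \<le> ?m / 2" using mpos by simp
  have EF: "Ex F = ?m"
  proof -
    have "F = (\<lambda>\<zeta>. Zc K a \<zeta> v N)" by (simp add: fun_eq_iff F_def)
    then show ?thesis using EZ[of v N] by simp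
  qed
  have "Ex F \<le> Ex (\<lambda>\<zeta>. ?m / 2 + (H1 \<zeta> + H2 \<zeta>))"
  proof (rule Ex_mono[OF _ _ Fb])
    show "\<bar>?m / 2 + (H1 \<zeta> + H2 \<zeta>)\<bar> \<le> ?m / 2 + (CC * ?m + (1 / (4 * CC * ?m)) * (real K ^ N * real K ^ N))" for \<zeta>
      using c0 c12[of \<zeta>] abs_triangle_ineq[of "?m/2" "H1 \<zeta> + H2 \<zeta>"] by linarith
  qed (use pw in \<open>auto simp: add.assoc H1_def H2_def\<close>)
  also have "\<dots> = ?m / 2 + (Ex H1 + Ex H2)"
    using Ex_add[of "\<lambda>_. ?m / 2" "\<lambda>\<zeta>. H1 \<zeta> + H2 \<zeta>", OF _ _ c0 c12]
      Ex_add[of H1 H2, OF _ _ c1 c2] by simp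
  also have "\<dots> = ?m / 2 + ((CC * ?m) * PE (Aev v N) + (1 / (4 * CC * ?m)) * Ex (\<lambda>\<zeta>. F \<zeta> * F \<zeta>))"
    unfolding H1_def H2_def Ex_cmult Ex_ind ..
  also have "\<dots> \<le> ?m / 2 + ((CC * ?m) * PE (Aev v N) + (1 / (4 * CC * ?m)) * (CC * ?m * ?m))"
    using EZ2[OF mu1, of v N] CC1 mpos unfolding F_def
    by (intro add_left_mono mult_left_mono) (auto simp: power_mult power2_eq_square power_mult_distrib)
  also have "\<dots> = ?m / 2 + (CC * ?m) * PE (Aev v N) + ?m / 4"
    using CC1 mpos by (simp add: field_simps)
  finally have "?m \<le> ?m / 2 + (CC * ?m) * PE (Aev v N) + ?m / 4"
    using EF by simp
  then have "?m / 4 \<le> (CC * ?m) * PE (Aev v N)" by simp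
  then have "?m * (1 / (4 * CC)) \<le> ?m * PE (Aev v N)" using CC1 by (simp add: field_simps)
  then show ?thesis using mpos by (metis mult_le_cancel_left_pos)
qed

end

context gw
begin

definition Good :: "nat list \<Rightarrow> nat \<Rightarrow> (nat list \<Rightarrow> pp) set" where
  "Good v N = Aev v N - (\<Union>k. Bad v (N + k))"

lemma Good_sets[measurable]: "Good v N \<in> sets CS"
  unfolding Good_def by measurable

lemma Good_dep: "dep (sub v) (\<lambda>\<zeta>. \<zeta> \<in> Good v N)"
  unfolding dep_def
proof (intro allI impI)
  fix \<zeta> \<zeta>' :: "nat list \<Rightarrow> pp" assume h: "\<forall>u\<in>sub v. \<zeta> u = \<zeta>' u"
  have 1: "Zc K a \<zeta> v N = Zc K a \<zeta>' v N" using Zc_dep[of v K a N] h unfolding dep_def by blast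
  have 2: "Dc K a mu \<zeta> v n = Dc K a mu \<zeta>' v n" for n using Dc_dep[of v K a mu n] h unfolding dep_def by blast
  show "(\<zeta> \<in> Good v N) = (\<zeta>' \<in> Good v N)"
    unfolding Good_def Aev_def Bad_def using 1 2 by simp
qed

lemma geo_sum:
  assumes "0 \<le> q" "q < (1::real)"
  shows "(\<lambda>j. q ^ (N + j)) sums (q ^ N / (1 - q))"
  using sums_mult[OF geometric_sums[of q], of "q ^ N"] assms by (simp add: power_add divide_inverse)

lemma grow:
  assumes mu1: "mu > 1" and G: "\<zeta> \<in> Good v N" and sm: "(1 / bb) ^ N / (1 - 1 / bb) \<le> 1 / 4"
    and n: "N \<le> n"
  shows "mu ^ n / 4 \<le> Zc K a \<zeta> v n"
proof -
  have b1: "bb > 1" and b4: "bb ^ 4 = mu" using bb mu1 by auto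
  define q where "q = 1 / bb"
  have q: "0 \<le> q" "q < 1" using b1 by (auto simp: q_def)
  have claim: "Zc K a \<zeta> v (N + k) / mu ^ (N + k) \<ge> 1/2 - (\<Sum>j<k. q ^ (N + j))" for k
  proof (induction k)
    case 0
    have "mu ^ N / 2 \<le> Zc K a \<zeta> v N" using G by (simp add: Good_def Aev_def)
    moreover have "mu ^ N > 0" using mu1 by simp
    ultimately show ?case by (simp add: le_divide_eq)
  next
    case (Suc k)
    let ?n = "N + k"
    have nb: "\<zeta> \<notin> Bad v ?n" using G by (auto simp: Good_def)
    then have d: "\<bar>Dc K a mu \<zeta> v ?n\<bar> < bb ^ (3 * ?n)" by (simp add: Bad_def)
    have mp: "mu ^ ?n > 0" by (rule zero_less_power) (use mu1 in linarith)
    have mS: "mu ^ Suc ?n > 0" by (rule zero_less_power) (use mu1 in linarith)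
    have eq: "Zc K a \<zeta> v (Suc ?n) = mu * Zc K a \<zeta> v ?n + Dc K a mu \<zeta> v ?n"
      by (simp add: Dc_def)
    have "Zc K a \<zeta> v (Suc ?n) / mu ^ Suc ?n = Zc K a \<zeta> v ?n / mu ^ ?n + Dc K a mu \<zeta> v ?n / mu ^ Suc ?n"
      unfolding eq add_divide_distrib power_Suc using mu1 by simp
    moreover have "\<bar>Dc K a mu \<zeta> v ?n / mu ^ Suc ?n\<bar> \<le> q ^ ?n"
    proof -
      have "\<bar>Dc K a mu \<zeta> v ?n / mu ^ Suc ?n\<bar> = \<bar>Dc K a mu \<zeta> v ?n\<bar> / mu ^ Suc ?n"
        by (rule abs_div_pos[OF mS, symmetric])
      also have "\<dots> \<le> bb ^ (3 * ?n) / mu ^ Suc ?n"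
        by (rule divide_right_mono) (use d mS in auto)
      also have "\<dots> \<le> bb ^ (3 * ?n) / mu ^ ?n"
      proof (rule divide_left_mono)
          show "mu ^ ?n \<le> mu ^ Suc ?n" by (rule power_increasing) (use mu1 in auto)
          show "0 \<le> bb ^ (3 * ?n)" using b1 by simp
          show "0 < mu ^ Suc ?n * mu ^ ?n" using mp mS by simp
        qed
      also have "\<dots> = q ^ ?n"
      proof -
        have "mu ^ ?n = bb ^ (4 * ?n)" using b4 by (metis power_mult)
        also have "\<dots> = bb ^ (3 * ?n + ?n)" by simp
        also have "\<dots> = bb ^ (3 * ?n) * bb ^ ?n" by (rule power_add)
        finally have "mu ^ ?n = bb ^ (3 * ?n) * bb ^ ?n" .
        then show ?thesis using b1 by (simp add: q_def power_one_over)
      qed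
      finally show ?thesis .
    qed
    ultimately have "Zc K a \<zeta> v (Suc ?n) / mu ^ Suc ?n \<ge> Zc K a \<zeta> v ?n / mu ^ ?n - q ^ ?n"
      by linarith
    moreover have "(\<Sum>j<Suc k. q ^ (N + j)) = (\<Sum>j<k. q ^ (N + j)) + q ^ ?n" by simp
    ultimately show ?case using Suc.IH by simp
  qed
  obtain k where k: "n = N + k" using n le_Suc_ex by blast
  have "(\<Sum>j<k. q ^ (N + j)) \<le> q ^ N / (1 - q)"
    using sum_le_suminf[OF sums_summable[OF geo_sum[OF q]], of "{..<k}"] sums_unique[OF geo_sum[OF q]] q
    by auto
  then have "Zc K a \<zeta> v n / mu ^ n \<ge> 1/4"
    using claim[of k] sm unfolding k q_def by linarith
  then show ?thesis using mu1 by (simp add: field_simps)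
qed

lemma PE_Good:
  assumes mu1: "mu > 1" and sm: "real K ^ 2 * ((1 / bb) ^ N / (1 - 1 / bb)) \<le> 1 / (8 * CC)"
  shows "PE (Good v N) \<ge> 1 / (8 * CC)"
proof -
  have b1: "bb > 1" using bb mu1 by auto
  define q where "q = 1 / bb"
  have q: "0 \<le> q" "q < 1" using b1 by (auto simp: q_def)
  let ?B = "\<lambda>k. cf -` Bad v (N + k) \<inter> space M"
  let ?A = "cf -` Aev v N \<inter> space M"
  have Bs: "?B k \<in> sets M" for k by measurable
  have As: "?A \<in> sets M" by measurable
  have pb: "measure M (?B k) \<le> real K ^ 2 * q ^ (N + k)" for k
    using PE_Bad[OF mu1, of v "N + k"] by (simp add: PE_def q_def)
  have sumb: "summable (\<lambda>k. real K ^ 2 * q ^ (N + k))"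
    using summable_mult[OF sums_summable[OF geo_sum[OF q]]] .
  have sumB: "summable (\<lambda>k. measure M (?B k))"
    by (rule summable_comparison_test[OF _ sumb]) (use pb in auto)
  have "measure M (\<Union>k. ?B k) \<le> (\<Sum>k. measure M (?B k))"
    by (rule finite_measure_subadditive_countably) (use Bs sumB in auto)
  also have "\<dots> \<le> (\<Sum>k. real K ^ 2 * q ^ (N + k))"
    by (rule suminf_le[OF pb sumB sumb])
  also have "\<dots> = real K ^ 2 * (q ^ N / (1 - q))"
    using sums_unique[OF sums_mult[OF geo_sum[OF q], of "real K ^ 2"]] by simp
  finally have U: "measure M (\<Union>k. ?B k) \<le> 1 / (8 * CC)" using sm by (simp add: q_def)
  have eq: "cf -` Good v N \<inter> space M = ?A - (\<Union>k. ?B k)"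
    by (auto simp: Good_def)
  have "measure M (?A - (\<Union>k. ?B k)) = measure M ?A - measure M (?A \<inter> (\<Union>k. ?B k))"
    by (rule finite_measure_Diff') (use As Bs in auto)
  also have "\<dots> \<ge> measure M ?A - measure M (\<Union>k. ?B k)"
    by (intro diff_left_mono finite_measure_mono) (use Bs in auto)
  finally have "PE (Good v N) \<ge> PE (Aev v N) - measure M (\<Union>k. ?B k)"
    unfolding PE_def eq .
  moreover have "PE (Aev v N) \<ge> 1 / (4 * CC)" by (rule PE_Aev[OF mu1])
  moreover have "1 / (4 * CC) - 1 / (8 * CC) = 1 / (8 * CC)" by (simp add: field_simps)
  ultimately show ?thesis using U by linarith
qed

end

lemma pos_snoc: "pos X (u @ [x]) = pos X u + X u x"
proof -
  have "pos X (u @ [x]) = (\<Sum>k<Suc (length u). X (take k (u @ [x])) ((u @ [x]) ! k))"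
    by (simp add: pos_def)
  also have "\<dots> = (\<Sum>k<length u. X (take k (u @ [x])) ((u @ [x]) ! k)) + X u x"
    by simp
  also have "(\<Sum>k<length u. X (take k (u @ [x])) ((u @ [x]) ! k)) = pos X u"
    unfolding pos_def by (intro sum.cong refl) (auto simp: nth_append)
  finally show ?thesis .
qed

lemma pos_append_lower:
  assumes "\<And>l. l < length w \<Longrightarrow> - a0 \<le> X (v @ take l w) (w ! l)"
  shows "pos X v - real (length w) * a0 \<le> pos X (v @ w)"
  using assms
proof (induction w rule: rev_induct)
  case Nil then show ?case by simp
next
  case (snoc x w)
  have IH: "pos X v - real (length w) * a0 \<le> pos X (v @ w)"
  proof (rule snoc.IH)
    fix l assume l: "l < length w"
    then show "- a0 \<le> X (v @ take l w) (w ! l)"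
      using snoc.prems[of l] by (simp add: nth_append)
  qed
  have "- a0 \<le> X (v @ w) x"
    using snoc.prems[of "length w"] by simp
  then show ?case using IH pos_snoc[of X "v @ w" x] by (simp add: algebra_simps)
qed

definition gp :: "real \<Rightarrow> pp \<Rightarrow> nat \<Rightarrow> bool" where
  "gp a z i \<longleftrightarrow> enat i < fst z \<and> - a \<le> snd z i"

lemma gd_gp: "gd a z i = (if gp a z i then 1 else 0)"
  by (simp add: gd_def gp_def)

definition Tw :: "nat \<Rightarrow> real \<Rightarrow> (nat list \<Rightarrow> pp) \<Rightarrow> nat list \<Rightarrow> nat \<Rightarrow> nat list set" where
  "Tw K a \<zeta> v n = {w. length w = n \<and> (\<forall>j<n. w ! j < K \<and> gp a (\<zeta> (v @ take j w)) (w ! j))}"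

lemma Tw_fin: "finite (Tw K a \<zeta> v n)"
proof (rule finite_subset)
  show "Tw K a \<zeta> v n \<subseteq> {w. set w \<subseteq> {..<K} \<and> length w = n}"
    by (auto simp: Tw_def in_set_conv_nth)
  show "finite {w. set w \<subseteq> {..<K} \<and> length w = n}"
    by (rule finite_lists_length_eq) simp
qed

lemma Tw_Suc: "Tw K a \<zeta> v (Suc n) = (\<Union>i\<in>{i. i < K \<and> gp a (\<zeta> v) i}. (\<lambda>w. i # w) ` Tw K a \<zeta> (v @ [i]) n)"
proof (intro equalityI subsetI)
  fix u assume "u \<in> Tw K a \<zeta> v (Suc n)"
  then have u: "length u = Suc n" "\<And>j. j < Suc n \<Longrightarrow> u ! j < K \<and> gp a (\<zeta> (v @ take j u)) (u ! j)"
    by (auto simp: Tw_def)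
  obtain i w where iw: "u = i # w" using u(1) by (cases u) auto
  have "i < K \<and> gp a (\<zeta> v) i" using u(2)[of 0] iw by simp
  moreover have "w \<in> Tw K a \<zeta> (v @ [i]) n"
    unfolding Tw_def using u iw by (auto dest: spec[of _ "Suc _"] simp: u(2)[of "Suc _", unfolded iw, simplified])
  ultimately show "u \<in> (\<Union>i\<in>{i. i < K \<and> gp a (\<zeta> v) i}. (\<lambda>w. i # w) ` Tw K a \<zeta> (v @ [i]) n)"
    using iw by auto
next
  fix u assume "u \<in> (\<Union>i\<in>{i. i < K \<and> gp a (\<zeta> v) i}. (\<lambda>w. i # w) ` Tw K a \<zeta> (v @ [i]) n)"
  then obtain i w where iw: "u = i # w" "i < K" "gp a (\<zeta> v) i" "w \<in> Tw K a \<zeta> (v @ [i]) n" by auto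
  show "u \<in> Tw K a \<zeta> v (Suc n)"
    unfolding Tw_def
  proof (rule CollectI, rule conjI)
    show "length u = Suc n" using iw by (simp add: Tw_def)
    show "\<forall>j<Suc n. u ! j < K \<and> gp a (\<zeta> (v @ take j u)) (u ! j)"
    proof (intro allI impI)
    fix j assume j: "j < Suc n"
    show "u ! j < K \<and> gp a (\<zeta> (v @ take j u)) (u ! j)"
    proof (cases j)
      case 0 then show ?thesis using iw by simp
    next
      case (Suc j')
      then show ?thesis using iw j by (auto simp: Tw_def)
    qed
    qed
  qed
qed

lemma Zc_card: "Zc K a \<zeta> v n = real (card (Tw K a \<zeta> v n))"
proof (induction n arbitrary: v)
  case 0
  have "Tw K a \<zeta> v 0 = {[]}" by (auto simp: Tw_def)
  then show ?case by simp
next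
  case (Suc n)
  let ?I = "{i. i < K \<and> gp a (\<zeta> v) i}"
  have fI: "finite ?I" by simp
  have "card (Tw K a \<zeta> v (Suc n)) = (\<Sum>i\<in>?I. card ((\<lambda>w. i # w) ` Tw K a \<zeta> (v @ [i]) n))"
    unfolding Tw_Suc by (rule card_UN_disjoint) (auto simp: Tw_fin)
  also have "\<dots> = (\<Sum>i\<in>?I. card (Tw K a \<zeta> (v @ [i]) n))"
    by (intro sum.cong refl card_image) (auto simp: inj_on_def)
  finally have "real (card (Tw K a \<zeta> v (Suc n))) = (\<Sum>i\<in>?I. Zc K a \<zeta> (v @ [i]) n)"
    by (simp add: Suc)
  also have "\<dots> = (\<Sum>i\<in>{..<K}. if gp a (\<zeta> v) i then Zc K a \<zeta> (v @ [i]) n else 0)"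
    using sum.inter_filter[of "{..<K}" "\<lambda>i. Zc K a \<zeta> (v @ [i]) n" "gp a (\<zeta> v)"] by (simp add: lessThan_def)
  also have "\<dots> = Zc K a \<zeta> v (Suc n)"
    by (simp add: gd_gp) (intro sum.cong refl, auto)
  finally show ?case by simp
qed

lemma take_r: "j \<le> k \<Longrightarrow> take j (replicate k (0::nat) @ [1]) = replicate j 0"
  by (simp add: take_append)

lemma final_det:
  fixes \<zeta> :: "nat list \<Rightarrow> pp" and K N k :: nat and a0 mu bb :: real
  assumes a0: "a0 > 0" and cnt: "\<And>j. fst (\<zeta> (replicate j 0)) \<noteq> 0"
    and two: "enat 1 < fst (\<zeta> (replicate k 0))"
    and gr: "\<And>n. N \<le> n \<Longrightarrow> mu ^ n / 4 \<le> Zc K a0 \<zeta> (replicate k 0 @ [1]) n"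
    and b1: "bb > 1" and b4: "bb ^ 4 = mu"
  shows "eventually (\<lambda>n. let S = good_set (\<lambda>u. fst (\<zeta> u)) (\<lambda>u. snd (\<zeta> u)) (2 * a0) n
           in infinite S \<or> bb ^ n \<le> real (card S)) sequentially"
proof -
  define r where "r = replicate k (0::nat) @ [1]"
  define X where "X = (\<lambda>u. snd (\<zeta> u))"
  define B where "B = (\<Sum>j\<le>Suc k. \<bar>pos X (take j r)\<bar>)"
  have lr: "length r = Suc k" by (simp add: r_def)
  have Bj: "\<bar>pos X (take j r)\<bar> \<le> B" if "j \<le> Suc k" for j
    unfolding B_def using that by (intro member_le_sum) auto
  obtain n1 :: nat where n1: "B / a0 < n1" using reals_Archimedean2 by blast
  then have n1': "B \<le> real n1 * a0" using a0 by (simp add: field_simps)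
  obtain n2 :: nat where n2: "4 * bb ^ Suc k < bb ^ n2" using real_arch_pow[OF b1] by blast
  show ?thesis unfolding eventually_sequentially
  proof (intro exI allI impI)
    fix n' assume n': "Suc k + N + n1 + n2 \<le> n'"
    define n where "n = n' - Suc k"
    have nn': "n' = Suc k + n" and nN: "N \<le> n" and nn1: "n1 \<le> n" and nn2: "n2 \<le> n"
      using n' by (auto simp: n_def)
    define S where "S = good_set (\<lambda>u. fst (\<zeta> u)) (\<lambda>u. snd (\<zeta> u)) (2 * a0) n'"
    have sub: "(\<lambda>w. r @ w) ` Tw K a0 \<zeta> r n \<subseteq> S"
    proof
      fix u assume "u \<in> (\<lambda>w. r @ w) ` Tw K a0 \<zeta> r n"
      then obtain w where u: "u = r @ w" and w: "w \<in> Tw K a0 \<zeta> r n" by auto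
      have lw: "length w = n" and wc: "\<And>j. j < n \<Longrightarrow> w ! j < K \<and> gp a0 (\<zeta> (r @ take j w)) (w ! j)"
        using w by (auto simp: Tw_def)
      have len: "length u = n'" using u lw lr nn' by simp
      have tree: "in_tree (\<lambda>u. fst (\<zeta> u)) u"
        unfolding in_tree_def
      proof (intro allI impI)
        fix j assume j: "j < length u"
        show "enat (u ! j) < fst (\<zeta> (take j u))"
        proof (cases "j < k")
          case True
          then have "u ! j = 0" "take j u = replicate j 0" using u lr
            by (auto simp: r_def nth_append take_append)
          then show ?thesis using cnt[of j] by (simp add: zero_enat_def[symmetric])
        next
          case False
          show ?thesis
          proof (cases "j = k")
            case True
            then have "u ! j = 1" "take j u = replicate k 0" using u lr
              by (auto simp: r_def nth_append take_append)
            then show ?thesis using two by (simp add: one_enat_def)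
          next
            case False2: False
            then obtain l where l: "j = Suc k + l" using \<open>\<not> j < k\<close> by (metis add_Suc less_imp_Suc_add linorder_neqE_nat)
            have ln: "l < n" using j l len nn' by simp
            have "u ! j = w ! l" "take j u = r @ take l w" using u lr l by (auto simp: nth_append)
            then show ?thesis using wc[OF ln] by (simp add: gp_def)
          qed
        qed
      qed
      have posb: "- (real n' * (2 * a0)) \<le> pos X (take j u)" if j: "j \<le> n'" for j
      proof (cases "j \<le> Suc k")
        case True
        then have "take j u = take j r" using u lr by (simp add: take_append)
        moreover have "- B \<le> pos X (take j r)" using Bj[OF True] by linarith
        moreover have "B \<le> real n' * (2 * a0)"
        proof -
          have "real n1 * a0 \<le> real n' * a0" using nn1 nn' a0 by (intro mult_right_mono) auto
          moreover have "real n' * a0 \<le> real n' * (2 * a0)" using a0 by simp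
          ultimately show ?thesis using n1' by linarith
        qed
        ultimately show ?thesis by simp
      next
        case False
        then obtain l where l: "j = Suc k + l" by (metis le_Suc_ex nat_le_linear)
        have ln: "l \<le> n" using j l nn' by simp
        have tj: "take j u = r @ take l w" using u lr l by simp
        have "pos X r - real (length (take l w)) * a0 \<le> pos X (r @ take l w)"
        proof (rule pos_append_lower)
          fix l' assume l': "l' < length (take l w)"
          then have "l' < n" "l' < l" using lw by auto
          then show "- a0 \<le> X (r @ take l' (take l w)) (take l w ! l')"
            using wc[of l'] by (simp add: gp_def X_def min_def)
        qed
        moreover have "real (length (take l w)) * a0 \<le> real n' * a0"
          using lw ln nn' a0 by (intro mult_right_mono) auto
        moreover have "- B \<le> pos X r" using Bj[of "Suc k"] lr by simp
        moreover have "B \<le> real n' * a0"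
        proof -
          have "real n1 * a0 \<le> real n' * a0" using nn1 nn' a0 by (intro mult_right_mono) auto
          then show ?thesis using n1' by linarith
        qed
        ultimately show ?thesis unfolding tj by (simp add: algebra_simps)
      qed
      show "u \<in> S" unfolding S_def good_set_def
        using tree len posb by (auto simp: X_def)
    qed
    show "let S = good_set (\<lambda>u. fst (\<zeta> u)) (\<lambda>u. snd (\<zeta> u)) (2 * a0) n'
           in infinite S \<or> bb ^ n' \<le> real (card S)"
      unfolding Let_def S_def[symmetric]
    proof (cases "finite S")
      case True
      have "card ((\<lambda>w. r @ w) ` Tw K a0 \<zeta> r n) = card (Tw K a0 \<zeta> r n)"
        by (rule card_image) (simp add: inj_on_def)
      then have c1: "real (card (Tw K a0 \<zeta> r n)) \<le> real (card S)"
        using card_mono[OF True sub] by simp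
      have c2: "mu ^ n / 4 \<le> real (card (Tw K a0 \<zeta> r n))"
        using gr[OF nN] Zc_card by (simp add: r_def)
      have c3: "bb ^ n' \<le> mu ^ n / 4"
      proof -
        have "bb ^ n2 \<le> bb ^ n" using nn2 b1 by (intro power_increasing) auto
        also have "\<dots> \<le> bb ^ (3 * n)" using b1 by (intro power_increasing) auto
        finally have h: "4 * bb ^ Suc k \<le> bb ^ (3 * n)" using n2 by linarith
        have "bb ^ n' = bb ^ Suc k * bb ^ n" by (simp add: nn' power_add)
        also have "\<dots> \<le> (bb ^ (3 * n) / 4) * bb ^ n" using h b1 by (intro mult_right_mono) auto
        also have "\<dots> = bb ^ (4 * n) / 4" by (simp add: power_add[symmetric])
        also have "\<dots> = mu ^ n / 4" using b4 by (simp add: power_mult)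
        finally show ?thesis .
      qed
      show "infinite S \<or> bb ^ n' \<le> real (card S)" using c1 c2 c3 by linarith
    qed simp
  qed
qed

abbreviation wv :: "nat \<Rightarrow> nat list" where "wv k \<equiv> replicate k 0"
abbreviation rv :: "nat \<Rightarrow> nat list" where "rv k \<equiv> replicate k 0 @ [1]"

lemma rv_inj: "rv k @ x = rv k' @ y \<Longrightarrow> k = k'"
proof (rule ccontr)
  assume h: "rv k @ x = rv k' @ y" and ne: "k \<noteq> k'"
  show False
  proof (cases "k < k'")
    case True
    have "(rv k @ x) ! k = 1" by (simp add: nth_append)
    moreover have "(rv k' @ y) ! k = 0" using True by (simp add: nth_append)
    ultimately show False using h by simp
  next
    case False
    then have "k' < k" using ne by simp
    have "(rv k' @ y) ! k' = 1" by (simp add: nth_append)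
    moreover have "(rv k @ x) ! k' = 0" using \<open>k' < k\<close> by (simp add: nth_append)
    ultimately show False using h by simp
  qed
qed

lemma wv_not_sub: "wv j \<notin> sub (rv k)"
proof
  assume "wv j \<in> sub (rv k)"
  then obtain x where "wv j = rv k @ x" by (auto simp: sub_def)
  then have "1 \<in> set (wv j)" by simp
  then show False by simp
qed

definition JJ :: "nat \<Rightarrow> nat list set" where "JJ k = {wv k} \<union> sub (rv k)"

lemma JJ_disj: "disjoint_family_on JJ UNIV"
  unfolding disjoint_family_on_def JJ_def
proof (intro ballI impI)
  fix k k' :: nat assume "k \<in> UNIV" "k' \<in> UNIV" "k \<noteq> k'"
  then have ne: "k \<noteq> k'" by simp
  have 1: "wv k \<noteq> wv k'" using ne by simp
  have 2: "sub (rv k) \<inter> sub (rv k') = {}"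
  proof (rule ccontr)
    assume "sub (rv k) \<inter> sub (rv k') \<noteq> {}"
    then obtain x y where "rv k @ x = rv k' @ y" unfolding sub_def by blast
    then show False using rv_inj ne by blast
  qed
  show "({wv k} \<union> sub (rv k)) \<inter> ({wv k'} \<union> sub (rv k')) = {}"
    using 1 2 wv_not_sub[of k k'] wv_not_sub[of k' k] by blast
qed

context gw
begin

definition EE :: "nat \<Rightarrow> nat \<Rightarrow> (nat list \<Rightarrow> pp) set" where
  "EE N k = {\<zeta>. enat 1 < fst (\<zeta> (wv k))} \<inter> Good (rv k) N"

lemma EE_sets[measurable]: "EE N k \<in> sets CS"
proof -
  have "{\<zeta> \<in> space CS. enat 1 < fst (\<zeta> (wv k))} \<in> sets CS"
    unfolding pp_space_def by measurable
  then show ?thesis unfolding EE_def by (intro sets.Int) auto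
qed

lemma EE_dep: "dep (JJ k) (\<lambda>\<zeta>. \<zeta> \<in> EE N k)"
  unfolding dep_def
proof (intro allI impI)
  fix \<zeta> \<zeta>' :: "nat list \<Rightarrow> pp" assume h: "\<forall>u\<in>JJ k. \<zeta> u = \<zeta>' u"
  have 1: "\<zeta> (wv k) = \<zeta>' (wv k)" using h by (simp add: JJ_def)
  have "\<forall>u\<in>sub (rv k). \<zeta> u = \<zeta>' u" using h by (simp add: JJ_def)
  then have 2: "(\<zeta> \<in> Good (rv k) N) = (\<zeta>' \<in> Good (rv k) N)"
    using Good_dep[of "rv k" N] unfolding dep_def by blast
  show "(\<zeta> \<in> EE N k) = (\<zeta>' \<in> EE N k)" unfolding EE_def using 1 2 by simp
qed

lemma PE_EE:
  "PE (EE N k) = measure LL {z \<in> space LL. enat 1 < fst z} * PE (Good (rv k) N)"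
proof -
  define h where "h z = (if enat 1 < fst z then 1 else 0 :: real)" for z :: pp
  have hm[measurable]: "h \<in> borel_measurable pp_space" unfolding h_def pp_space_def by measurable
  have hm'[measurable]: "(\<lambda>\<zeta>. h (\<zeta> (wv k))) \<in> borel_measurable CS" by measurable
  have hb: "\<bar>h z\<bar> \<le> 1" for z by (simp add: h_def)
  have ib: "\<bar>indicator (Good (rv k) N) \<zeta>\<bar> \<le> (1::real)" for \<zeta> by (simp add: indicator_def)
  have "indicator (EE N k) = (\<lambda>\<zeta>. h (\<zeta> (wv k)) * indicator (Good (rv k) N) \<zeta>)"
    by (auto simp: fun_eq_iff EE_def h_def indicator_def)
  then have "PE (EE N k) = Ex (\<lambda>\<zeta>. h (\<zeta> (wv k)) * indicator (Good (rv k) N) \<zeta>)"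
    using Ex_ind[of "EE N k"] by simp
  also have "\<dots> = Ex (\<lambda>\<zeta>. h (\<zeta> (wv k))) * Ex (indicator (Good (rv k) N))"
  proof (rule Ex_indep[where A="{wv k}" and B="sub (rv k)" and c=1 and d=1])
    show "{wv k} \<inter> sub (rv k) = {}" using wv_not_sub by auto
    show "dep {wv k} (\<lambda>\<zeta>. h (\<zeta> (wv k)))" by (rule dep_single)
    show "dep (sub (rv k)) (indicator (Good (rv k) N) :: _ \<Rightarrow> real)"
    proof -
      have "\<And>\<zeta> \<zeta>'. (\<forall>u\<in>sub (rv k). \<zeta> u = \<zeta>' u) \<Longrightarrow> (\<zeta> \<in> Good (rv k) N) = (\<zeta>' \<in> Good (rv k) N)"
        using Good_dep[of "rv k" N] unfolding dep_def by blast
      then show ?thesis unfolding dep_def by (metis indicator_simps)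
    qed
  qed (auto intro: hb ib)
  also have "Ex (\<lambda>\<zeta>. h (\<zeta> (wv k))) = (\<integral>z. h z \<partial>LL)"
    unfolding Ex_def by (rule int_dist[OF hm, where c=1]) (auto simp: h_def)
  also have "(\<integral>z. h z \<partial>LL) = measure LL {z \<in> space LL. enat 1 < fst z}"
  proof -
    have "h = indicator {z \<in> space LL. enat 1 < fst z}"
      using dist[of "[]"] by (auto simp: fun_eq_iff h_def indicator_def)
    then have "(\<integral>z. h z \<partial>LL) = measure LL ({z \<in> space LL. enat 1 < fst z} \<inter> space LL)" by simp
    also have "{z \<in> space LL. enat 1 < fst z} \<inter> space LL = {z \<in> space LL. enat 1 < fst z}" by auto
    finally show ?thesis .
  qed
  finally show ?thesis by (simp add: Ex_ind)
qed

end

context gw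
begin

lemma indep_C: "indep_events (\<lambda>k. {\<omega> \<in> space M. cf \<omega> \<notin> EE N k}) UNIV"
proof -
  have iv: "indep_vars (\<lambda>k. PiM (JJ k) (\<lambda>_. pp_space)) (\<lambda>k \<omega>. restrict (\<lambda>i. Z i \<omega>) (JJ k)) UNIV"
    by (rule indep_vars_restrict[OF indep]) (auto simp: JJ_disj)
  have ie: "indep_events (\<lambda>k. {\<omega> \<in> space M. ext (JJ k) (restrict (\<lambda>i. Z i \<omega>) (JJ k)) \<notin> EE N k}) UNIV"
  proof (rule indep_eventsI_indep_vars[OF iv])
    fix k :: nat
    have "ext (JJ k) -` (space CS - EE N k) \<inter> space (PiM (JJ k) (\<lambda>_. pp_space)) \<in> sets (PiM (JJ k) (\<lambda>_. pp_space))"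
      by (rule measurable_sets[OF ext_meas], rule sets.compl_sets, rule EE_sets)
    moreover have "ext (JJ k) -` (space CS - EE N k) \<inter> space (PiM (JJ k) (\<lambda>_. pp_space))
       = {x \<in> space (PiM (JJ k) (\<lambda>_. pp_space)). ext (JJ k) x \<notin> EE N k}" by auto
    ultimately show "{x \<in> space (PiM (JJ k) (\<lambda>_. pp_space)). ext (JJ k) x \<notin> EE N k} \<in> sets (PiM (JJ k) (\<lambda>_. pp_space))"
      by simp
  qed
  have eq: "(ext (JJ k) (restrict (\<lambda>i. Z i \<omega>) (JJ k)) \<in> EE N k) = (cf \<omega> \<in> EE N k)" for k \<omega>
  proof -
    have "\<forall>u\<in>JJ k. ext (JJ k) (restrict (\<lambda>i. Z i \<omega>) (JJ k)) u = cf \<omega> u"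
      by (simp add: ext_def cf_def)
    then show ?thesis using EE_dep[of k N] unfolding dep_def by blast
  qed
  show ?thesis using ie unfolding eq .
qed

lemma prob_inter_zero:
  assumes c: "c > 0" and pe: "\<And>k. PE (EE N k) \<ge> c"
  shows "prob (\<Inter>k. {\<omega> \<in> space M. cf \<omega> \<notin> EE N k}) = 0"
proof -
  let ?C = "\<lambda>k. {\<omega> \<in> space M. cf \<omega> \<notin> EE N k}"
  have Cs: "?C k \<in> events" for k by measurable
  have pC: "prob (?C k) = 1 - PE (EE N k)" for k
  proof -
    have "?C k = space M - (cf -` EE N k \<inter> space M)" by auto
    then show ?thesis unfolding PE_def by (simp add: prob_compl[symmetric] del: Diff_Int)
  qed
  have c1: "c \<le> 1" using pe[of 0] prob_le_1[of "cf -` EE N 0 \<inter> space M"] unfolding PE_def by linarith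
  have pe1: "PE (EE N k) \<le> 1" for k unfolding PE_def by (rule prob_le_1)
  have bnd: "prob (\<Inter>k. ?C k) \<le> (1 - c) ^ Suc n" for n
  proof -
    have "prob (\<Inter>k. ?C k) \<le> prob (\<Inter>k\<in>{..n}. ?C k)"
      by (rule finite_measure_mono) (use Cs in auto)
    also have "\<dots> = (\<Prod>k\<in>{..n}. prob (?C k))"
    proof -
      have "\<forall>J\<subseteq>UNIV. J \<noteq> {} \<longrightarrow> finite J \<longrightarrow> prob (\<Inter>j\<in>J. ?C j) = (\<Prod>j\<in>J. prob (?C j))"
        using indep_C[of N] unfolding indep_events_def by blast
      then have "{..n} \<noteq> {} \<longrightarrow> finite {..n} \<longrightarrow> prob (\<Inter>j\<in>{..n}. ?C j) = (\<Prod>j\<in>{..n}. prob (?C j))"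
        by blast
      then show ?thesis by simp
    qed
    also have "\<dots> \<le> (\<Prod>k\<in>{..n}. (1 - c))"
      by (rule prod_mono) (use pC pe pe1 in auto)
    also have "\<dots> = (1 - c) ^ Suc n" by simp
    finally show ?thesis .
  qed
  show ?thesis
  proof (rule ccontr)
    assume "prob (\<Inter>k. ?C k) \<noteq> 0"
    then have pos: "prob (\<Inter>k. ?C k) > 0" using measure_nonneg[of M "\<Inter>k. ?C k"] by linarith
    obtain n where n: "(1 - c) ^ n < prob (\<Inter>k. ?C k)" using real_arch_pow_inv[OF pos, of "1 - c"] c by auto
    have "(1 - c) ^ Suc n \<le> (1 - c) ^ n" using c c1 by (intro power_decreasing) auto
    then show False using bnd[of n] n by linarith
  qed
qed

end

context gw
begin

lemma main_gw:
  assumes mu1: "mu > 1" and a0: "a > 0"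
    and p2: "measure LL {z \<in> space LL. enat 1 < fst z} > 0"
    and A1a: "emeasure LL {z \<in> space LL. fst z = 0} = 0"
  shows "AE \<omega> in M. eventually (\<lambda>n. let S = good_set (\<lambda>u. fst (Z u \<omega>)) (\<lambda>u. snd (Z u \<omega>)) (2 * a) n
           in infinite S \<or> bb ^ n \<le> real (card S)) sequentially"
proof -
  have b1: "bb > 1" and b4: "bb ^ 4 = mu" using bb[OF mu1] by auto
  have CC1: "CC \<ge> 1" using mu1 by (simp add: CC_def)
  define q where "q = 1 / bb"
  have q: "0 < q" "q < 1" using b1 by (auto simp: q_def)
  define eps where "eps = (1 - q) / (8 * CC * (real K ^ 2 + 1))"
  have d: "0 < 8 * CC * (real K ^ 2 + 1)" using CC1 by (intro mult_pos_pos) (auto simp: add_nonneg_pos)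
  have eps: "eps > 0" unfolding eps_def using q d by (intro divide_pos_pos) auto
  obtain N where N: "q ^ N < eps" using real_arch_pow_inv[OF eps q(2)] by blast
  have base: "q ^ N / (1 - q) \<le> 1 / (8 * CC * (real K ^ 2 + 1))"
  proof -
    have qq: "0 < 1 - q" using q by simp
    have "q ^ N \<le> 1 / (8 * CC * (real K ^ 2 + 1)) * (1 - q)" using N by (simp add: eps_def)
    then show ?thesis by (subst pos_divide_le_eq[OF qq])
  qed
  have sm1: "(1 / bb) ^ N / (1 - 1 / bb) \<le> 1 / 4"
  proof -
    have "1 / (8 * CC * (real K ^ 2 + 1)) \<le> 1 / 4"
    proof -
      have "8 * 1 * 1 \<le> 8 * CC * (real K ^ 2 + 1)" using CC1
        by (intro mult_mono) auto
      then have "4 \<le> 8 * CC * (real K ^ 2 + 1)" by simp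
      then show ?thesis by (simp add: divide_simps)
    qed
    then show ?thesis using base unfolding q_def by linarith
  qed
  have sm2: "real K ^ 2 * ((1 / bb) ^ N / (1 - 1 / bb)) \<le> 1 / (8 * CC)"
  proof -
    have "real K ^ 2 * (q ^ N / (1 - q)) \<le> real K ^ 2 * (1 / (8 * CC * (real K ^ 2 + 1)))"
      using base by (intro mult_left_mono) auto
    also have "\<dots> \<le> 1 / (8 * CC)"
      using CC1 zero_le_power2[of "real K"] by (simp add: divide_simps; linarith)
    finally show ?thesis by (simp add: q_def)
  qed
  define p2m where "p2m = measure LL {z \<in> space LL. enat 1 < fst z}"
  define c where "c = p2m * (1 / (8 * CC))"
  have c: "c > 0" using p2 CC1 by (simp add: c_def p2m_def)
  have pe: "PE (EE N k) \<ge> c" for k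
    unfolding PE_EE c_def p2m_def[symmetric]
    using PE_Good[OF mu1 sm2, of "rv k"] p2 by (intro mult_left_mono) (auto simp: p2m_def)
  let ?C = "\<lambda>k. {\<omega> \<in> space M. cf \<omega> \<notin> EE N k}"
  have pz: "prob (\<Inter>k. ?C k) = 0" by (rule prob_inter_zero[OF c pe])
  have AE1: "AE \<omega> in M. \<exists>k. cf \<omega> \<in> EE N k"
  proof (rule AE_I'[of "\<Inter>k. ?C k"])
    have "(\<Inter>k. ?C k) \<in> sets M" by measurable
    then show "(\<Inter>k. ?C k) \<in> null_sets M" using pz by (simp add: null_sets_def emeasure_eq_measure)
  qed auto
  have AE2: "AE \<omega> in M. \<forall>j. fst (Z (wv j) \<omega>) \<noteq> 0"
    unfolding AE_all_countable
  proof
    fix j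
    let ?S = "{\<omega> \<in> space M. fst (Z (wv j) \<omega>) = 0}"
    show "AE \<omega> in M. fst (Z (wv j) \<omega>) \<noteq> 0"
    proof (rule AE_I'[of ?S])
      have Sz: "{z \<in> space LL. fst z = 0} \<in> sets pp_space"
      proof -
        have "{z \<in> space pp_space. fst z = 0} \<in> sets pp_space" unfolding pp_space_def by measurable
        moreover have "space LL = UNIV" using dist[of "[]"] by (metis space_distr space_pp)
        ultimately show ?thesis by simp
      qed
      have eqS: "?S = Z (wv j) -` {z \<in> space LL. fst z = 0} \<inter> space M"
        using dist[of "[]"] by auto
      then have "emeasure M ?S = emeasure (distr M pp_space (Z (wv j))) {z \<in> space LL. fst z = 0}"
        by (simp add: emeasure_distr[OF Z_meas Sz])
      also have "\<dots> = 0" using A1a dist[of "wv j"] by simp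
      finally have "emeasure M ?S = 0" .
      moreover have "?S \<in> sets M" using measurable_sets[OF Z_meas Sz] eqS by simp
      ultimately show "?S \<in> null_sets M" by (simp add: null_sets_def)
    qed auto
  qed
  show ?thesis
    using AE1 AE2
  proof eventually_elim
    case (elim \<omega>)
    then obtain k where k: "cf \<omega> \<in> EE N k" by blast
    have cnt: "fst (cf \<omega> (wv j)) \<noteq> 0" for j using elim by (simp add: cf_def)
    have two: "enat 1 < fst (cf \<omega> (wv k))" using k by (simp add: EE_def)
    have G: "cf \<omega> \<in> Good (rv k) N" using k by (simp add: EE_def)
    have gr: "mu ^ n / 4 \<le> Zc K a (cf \<omega>) (rv k) n" if "N \<le> n" for n
      by (rule grow[OF mu1 G sm1 that])
    from final_det[OF a0 cnt two gr b1 b4]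
    show ?case by (simp add: cf_def)
  qed
qed

end

lemma key_k:
  assumes "enat k \<le> fst z"
  shows "\<exists>n. real k \<le> (\<Sum>i<n. gd (real n) z i)"
proof -
  define n where "n = k + nat \<lceil>\<Sum>i<k. \<bar>snd z i\<bar>\<rceil>"
  have "real k = (\<Sum>i<k. gd (real n) z i)"
  proof -
    have "gd (real n) z i = 1" if i: "i < k" for i
    proof -
      have "enat i < enat k" using i by simp
      then have "enat i < fst z" using assms by (rule order_less_le_trans)
      moreover have "\<bar>snd z i\<bar> \<le> (\<Sum>i<k. \<bar>snd z i\<bar>)"
        using i by (intro member_le_sum) auto
      moreover have "(\<Sum>i<k. \<bar>snd z i\<bar>) \<le> real n"
      proof -
        have "(\<Sum>i<k. \<bar>snd z i\<bar>) \<le> real (nat \<lceil>\<Sum>i<k. \<bar>snd z i\<bar>\<rceil>)" by (rule real_nat_ceiling_ge)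
        also have "\<dots> \<le> real n" unfolding n_def by simp
        finally show ?thesis .
      qed
      ultimately show ?thesis by (auto simp: gd_def)
    qed
    then show ?thesis by simp
  qed
  also have "\<dots> \<le> (\<Sum>i<n. gd (real n) z i)"
    by (rule sum_mono2) (auto simp: n_def gd_01)
  finally show ?thesis by blast
qed

lemma count_le_SUP: "ennreal_of_enat (fst z) \<le> (SUP n. ennreal (\<Sum>i<n. gd (real n) z i))"
proof (cases "fst z")
  case (enat m)
  obtain n where "real m \<le> (\<Sum>i<n. gd (real n) z i)" using key_k[of m z] enat by auto
  then have "ennreal (real m) \<le> ennreal (\<Sum>i<n. gd (real n) z i)" by (rule ennreal_leI)
  then show ?thesis using enat by (auto intro: SUP_upper2 simp: ennreal_of_nat_eq_real_of_nat)
next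
  case infinity
  have "(SUP x. of_nat x :: ennreal) \<le> (SUP n. ennreal (\<Sum>i<n. gd (real n) z i))"
  proof (rule SUP_least)
    fix k :: nat
    obtain n where "real k \<le> (\<Sum>i<n. gd (real n) z i)" using key_k[of k z] infinity by auto
    then have "ennreal (real k) \<le> ennreal (\<Sum>i<n. gd (real n) z i)" by (rule ennreal_leI)
    then show "of_nat k \<le> (SUP n. ennreal (\<Sum>i<n. gd (real n) z i))"
      by (auto intro: SUP_upper2 simp: ennreal_of_nat_eq_real_of_nat)
  qed
  then show ?thesis using infinity by (simp add: ennreal_SUP_of_nat_eq_top)
qed

lemma gd_mono: "a \<le> a' \<Longrightarrow> gd a z i \<le> gd a' z i"
  by (auto simp: gd_def)

context bconf
begin

lemma sets_LL: "sets LL = sets pp_space" using dist[of "[]"] by (metis sets_distr)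
lemma space_LL: "space LL = UNIV" using dist[of "[]"] by (metis space_distr space_pp)
lemma LL_prob': "prob_space LL"
  using prob_space_distr[OF Z_meas[of "[]"]] dist by simp

lemma meas_LL: "f \<in> borel_measurable pp_space \<Longrightarrow> f \<in> borel_measurable LL"
  by (simp add: measurable_cong_sets[OF sets_LL refl])

lemma gd_int_LL: "integrable LL (\<lambda>z. (\<Sum>i<n. gd a z i))"
proof -
  interpret L: prob_space LL by (rule LL_prob')
  have m: "(\<lambda>z. (\<Sum>i<n. gd a z i)) \<in> borel_measurable LL"
    by (rule meas_LL) measurable
  have "\<bar>\<Sum>i<n. gd a z i\<bar> \<le> real n" for z
  proof -
    have "(\<Sum>i<n. gd a z i) \<le> (\<Sum>i<n. 1)" by (rule sum_mono) (simp add: gd_01)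
    moreover have "0 \<le> (\<Sum>i<n. gd a z i)" by (rule sum_nonneg) (simp add: gd_01)
    ultimately show ?thesis by simp
  qed
  then show ?thesis by (intro L.integrable_const_bound[OF _ m, where B="real n"]) auto
qed

lemma exists_Ka:
  assumes A1b: "(\<integral>\<^sup>+ z. ennreal_of_enat (fst z) \<partial>LL) > 1"
  shows "\<exists>K (a::real). a > 0 \<and> 1 < (\<integral>z. (\<Sum>i<K. gd a z i) \<partial>LL)"
proof (rule ccontr)
  assume "\<not> ?thesis"
  then have h: "\<And>K (a::real). a > 0 \<Longrightarrow> (\<integral>z. (\<Sum>i<K. gd a z i) \<partial>LL) \<le> 1"
    by (force simp: not_less)
  have le: "(\<integral>z. (\<Sum>i<n. gd (real n) z i) \<partial>LL) \<le> 1" for n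
  proof (cases n)
    case 0 then show ?thesis by simp
  next
    case (Suc m) then show ?thesis using h[of "real n" n] by (simp del: sum.lessThan_Suc)
  qed
  define f where "f n z = ennreal (\<Sum>i<n. gd (real n) z i)" for n z
  have fm: "f n \<in> borel_measurable LL" for n
    unfolding f_def by (rule meas_LL) measurable
  have inc: "incseq f"
  proof (rule incseq_SucI, rule le_funI)
    fix n z
    have "(\<Sum>i<n. gd (real n) z i) \<le> (\<Sum>i<n. gd (real (Suc n)) z i)"
      by (intro sum_mono gd_mono) auto
    also have "\<dots> \<le> (\<Sum>i<Suc n. gd (real (Suc n)) z i)"
      by (simp add: gd_01)
    finally show "f n z \<le> f (Suc n) z" unfolding f_def by (rule ennreal_leI)
  qed
  have fi: "integral\<^sup>N LL (f n) \<le> 1" for n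
  proof -
    have "integral\<^sup>N LL (f n) = ennreal (\<integral>z. (\<Sum>i<n. gd (real n) z i) \<partial>LL)"
    proof -
      have "\<And>z. 0 \<le> (\<Sum>i<n. gd (real n) z i)" by (rule sum_nonneg) (simp add: gd_01)
      then show ?thesis unfolding f_def by (intro nn_integral_eq_integral[OF gd_int_LL] AE_I2) 
    qed
    also have "\<dots> \<le> 1" using le[of n] by (simp add: ennreal_leI[of _ 1, simplified])
    finally show ?thesis .
  qed
  have "(\<integral>\<^sup>+ z. ennreal_of_enat (fst z) \<partial>LL) \<le> (\<integral>\<^sup>+ z. (SUP n. f n z) \<partial>LL)"
    by (rule nn_integral_mono) (simp add: f_def count_le_SUP)
  also have "\<dots> = (SUP n. integral\<^sup>N LL (f n))"
    by (rule nn_integral_monotone_convergence_SUP[OF inc fm])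
  also have "\<dots> \<le> 1" by (rule SUP_least) (rule fi)
  finally show False using A1b by simp
qed

lemma p2_pos:
  assumes A1b: "(\<integral>\<^sup>+ z. ennreal_of_enat (fst z) \<partial>LL) > 1"
  shows "measure LL {z \<in> space LL. enat 1 < fst z} > 0"
proof (rule ccontr)
  interpret L: prob_space LL by (rule LL_prob')
  assume "\<not> ?thesis"
  then have m0: "measure LL {z \<in> space LL. enat 1 < fst z} = 0" using measure_nonneg[of LL] by (meson not_less order_antisym)
  have sS: "{z \<in> space LL. enat 1 < fst z} \<in> sets LL"
  proof -
    have "{z \<in> space pp_space. enat 1 < fst z} \<in> sets pp_space" unfolding pp_space_def by measurable
    then show ?thesis by (simp add: sets_LL space_LL)
  qed
  have "{z \<in> space LL. enat 1 < fst z} \<in> null_sets LL"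
    using m0 sS by (simp add: null_sets_def L.emeasure_eq_measure)
  then have ae: "AE z in LL. ennreal_of_enat (fst z) \<le> 1"
  proof (rule AE_I')
    show "{z \<in> space LL. \<not> ennreal_of_enat (fst z) \<le> 1} \<subseteq> {z \<in> space LL. enat 1 < fst z}"
    proof safe
      fix z assume z: "z \<in> space LL" "\<not> ennreal_of_enat (fst z) \<le> 1"
      have "\<not> fst z \<le> 1" using z(2) ennreal_of_enat_le_iff[of "fst z" 1] by simp
      then show "enat 1 < fst z" unfolding one_enat_def[symmetric] by (simp add: not_le)
    qed
  qed
  have "(\<integral>\<^sup>+ z. ennreal_of_enat (fst z) \<partial>LL) \<le> (\<integral>\<^sup>+ z. 1 \<partial>LL)"
    by (rule nn_integral_mono_AE[OF ae])
  also have "\<dots> = 1" by (simp add: L.emeasure_space_1)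
  finally show False using A1b by simp
qed

end

context gw
begin

lemma mu_int: "mu = (\<integral>z. (\<Sum>i<K. gd a z i) \<partial>LL)"
proof -
  have "integrable LL (\<lambda>z. gd a z i)" for i
  proof -
    interpret L: prob_space LL by (rule LL_prob)
    show ?thesis by (rule L.integrable_const_bound[where B=1]) (auto simp: gabs0 intro: meas_LL)
  qed
  then show ?thesis unfolding mu_def p_def
    by (subst Bochner_Integration.integral_sum) auto
qed

end

theorem lemma2p8:
  fixes M :: "'w measure" and LL :: "pp measure" and Z :: "nat list \<Rightarrow> 'w \<Rightarrow> pp"
  assumes "prob_space M"
    and "prob_space.indep_vars M (\<lambda>_. pp_space) Z UNIV"
    and "\<And>u. distr M pp_space (Z u) = LL"
    and A1a: "emeasure LL {z \<in> space LL. fst z = 0} = 0"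
    and A1b: "(\<integral>\<^sup>+ z. ennreal_of_enat (fst z) \<partial>LL) > 1"
    and A3: "(\<integral>\<^sup>+ z. A3_integrand z \<partial>LL) < \<infinity>"
  shows "\<exists>a>0. \<exists>\<rho>>1. AE \<omega> in M. eventually (\<lambda>n.
           let S = good_set (\<lambda>u. fst (Z u \<omega>)) (\<lambda>u. snd (Z u \<omega>)) a n
           in infinite S \<or> \<rho> ^ n \<le> real (card S)) sequentially"
proof -
  interpret B: bconf M Z LL
    using assms(1,2,3) by (simp add: bconf_def bconf_axioms_def)
  obtain K and a :: real where a: "a > 0" and mu: "1 < (\<integral>z. (\<Sum>i<K. gd a z i) \<partial>LL)"
    using B.exists_Ka[OF A1b] by blast
  interpret G: gw M Z LL K a ..
  have mu1: "G.mu > 1" using mu G.mu_int by simp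
  have "AE \<omega> in M. eventually (\<lambda>n. let S = good_set (\<lambda>u. fst (Z u \<omega>)) (\<lambda>u. snd (Z u \<omega>)) (2 * a) n
           in infinite S \<or> G.bb ^ n \<le> real (card S)) sequentially"
    by (rule G.main_gw[OF mu1 a B.p2_pos[OF A1b] A1a])
  moreover have "G.bb > 1" using G.bb[OF mu1] by simp
  moreover have "2 * a > 0" using a by simp
  ultimately show ?thesis by blast
qed

end
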